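(* $\{\omega, \omega^\star\} \leq_c \{\omega^\omega, (\omega^\omega)^\star\}$.
   Context: Structures have domains contained in $\omega$. For countable structures $\mathcal{A},\mathcal{B}$, the class $\{\mathcal{A},\mathcal{B}\}$ denotes the class of all structures (with domain $\subseteq\omega$) isomorphic to $\mathcal{A}$ or to $\mathcal{B}$. Linear orders are in the language $\{<\}$; $L^\star$ is the reverse of a linear order $L$; $\omega^\omega$ denotes ordinal exponentiation (as an order type). An enumeration operator $\Gamma$ is a c.e. set of pairs $(\alpha,\varphi)$ with $\alpha$ a finite set of basic (atomic or negated atomic) sentences of the input language with constants from $\omega$ and $\varphi$ a basic sentence of the output language with constants from $\omega$; $\Gamma(X)=\{\varphi : (\alpha,\varphi)\in\Gamma,\ \alpha\subseteq X\}$. $\Gamma$ is a computable embedding of $\mathcal{K}_0$ into $\mathcal{K}_1$ ($\mathcal{K}_0\leq_c\mathcal{K}_1$) if for every $\mathcal{A}\in\mathcal{K}_0$, $\Gamma$ applied to the atomic diagram of $\mathcal{A}$ is the atomic diagram of a structure $\Gamma(\mathcal{A})\in\mathcal{K}_1$, and for all $\mathcal{A},\mathcal{B}\in\mathcal{K}_0$, $\mathcal{A}\cong\mathcal{B}$ iff $\Gamma(\mathcal{A})\cong\Gamma(\mathcal{B})$. *)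

theory Defs
  imports Main "HOL-Library.Nat_Bijection"
begin

inductive prim_rec :: "nat \<Rightarrow> (nat list \<Rightarrow> nat) \<Rightarrow> bool" where
  pr_zero: "prim_rec n (\<lambda>_. 0)"
| pr_succ: "prim_rec 1 (\<lambda>xs. Suc (hd xs))"
| pr_proj: "i < n \<Longrightarrow> prim_rec n (\<lambda>xs. xs ! i)"
| pr_comp: "prim_rec m g \<Longrightarrow> length gs = m \<Longrightarrow> (\<forall>h\<in>set gs. prim_rec n h)
            \<Longrightarrow> prim_rec n (\<lambda>xs. g (map (\<lambda>h. h xs) gs))"
| pr_rec: "prim_rec n g \<Longrightarrow> prim_rec (Suc (Suc n)) h
            \<Longrightarrow> prim_rec (Suc n) (\<lambda>xs. rec_nat (g (tl xs)) (\<lambda>k r. h (k # r # tl xs)) (hd xs))"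

text \<open>Computably enumerable sets of naturals (Kleene normal form: projection of a
  primitive recursive relation).\<close>
definition ce :: "nat set \<Rightarrow> bool" where
  "ce S \<longleftrightarrow> (\<exists>g. prim_rec 2 g \<and> S = {x. \<exists>y. g [x, y] = 0})"

datatype atom = Lt nat nat | Eq nat nat
datatype basic = Pos atom | Neg atom

fun atom_code :: "atom \<Rightarrow> nat" where
  "atom_code (Lt a b) = 2 * prod_encode (a, b)"
| "atom_code (Eq a b) = 2 * prod_encode (a, b) + 1"

fun basic_code :: "basic \<Rightarrow> nat" where
  "basic_code (Pos a) = 2 * atom_code a"
| "basic_code (Neg a) = 2 * atom_code a + 1"

definition pair_code :: "basic set \<times> basic \<Rightarrow> nat" where
  "pair_code p = prod_encode (set_encode (basic_code ` fst p), basic_code (snd p))"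

type_synonym struc = "nat set \<times> (nat \<times> nat) set"

definition is_struc :: "struc \<Rightarrow> bool" where
  "is_struc S \<longleftrightarrow> snd S \<subseteq> fst S \<times> fst S"

definition diag :: "struc \<Rightarrow> basic set" where
  "diag S =
     {Pos (Eq a a) | a. a \<in> fst S}
   \<union> {Neg (Eq a b) | a b. a \<in> fst S \<and> b \<in> fst S \<and> a \<noteq> b}
   \<union> {Pos (Lt a b) | a b. (a, b) \<in> snd S}
   \<union> {Neg (Lt a b) | a b. a \<in> fst S \<and> b \<in> fst S \<and> (a, b) \<notin> snd S}"

definition struc_iso :: "struc \<Rightarrow> struc \<Rightarrow> bool" where
  "struc_iso A B \<longleftrightarrow> (\<exists>f. bij_betw f (fst A) (fst B) \<and>
     (\<forall>x\<in>fst A. \<forall>y\<in>fst A. (x, y) \<in> snd A \<longleftrightarrow> (f x, f y) \<in> snd B))"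

definition iso_to :: "struc \<Rightarrow> 'a set \<Rightarrow> ('a \<Rightarrow> 'a \<Rightarrow> bool) \<Rightarrow> bool" where
  "iso_to S C lt \<longleftrightarrow> (\<exists>f. bij_betw f (fst S) C \<and>
     (\<forall>x\<in>fst S. \<forall>y\<in>fst S. (x, y) \<in> snd S \<longleftrightarrow> lt (f x) (f y)))"

definition cls2 :: "'a set \<Rightarrow> ('a \<Rightarrow> 'a \<Rightarrow> bool) \<Rightarrow> 'b set \<Rightarrow> ('b \<Rightarrow> 'b \<Rightarrow> bool) \<Rightarrow> struc set" where
  "cls2 C1 lt1 C2 lt2 = {S. is_struc S \<and> (iso_to S C1 lt1 \<or> iso_to S C2 lt2)}"

text \<open>omega^omega via the definition of ordinal exponentiation: finitely supported functions
  omega \<Rightarrow> omega, ordered antilexicographically (compare at the largest differing argument).\<close>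
definition omega_omega :: "(nat \<Rightarrow> nat) set" where
  "omega_omega = {f. finite {n. f n \<noteq> 0}}"

definition oo_less :: "(nat \<Rightarrow> nat) \<Rightarrow> (nat \<Rightarrow> nat) \<Rightarrow> bool" where
  "oo_less f g \<longleftrightarrow> (\<exists>n. f n < g n \<and> (\<forall>m>n. f m = g m))"

definition enum_op :: "(basic set \<times> basic) set \<Rightarrow> bool" where
  "enum_op \<Gamma> \<longleftrightarrow> (\<forall>p\<in>\<Gamma>. finite (fst p)) \<and> ce (pair_code ` \<Gamma>)"

definition enum_apply :: "(basic set \<times> basic) set \<Rightarrow> basic set \<Rightarrow> basic set" where
  "enum_apply \<Gamma> X = {\<phi>. \<exists>\<alpha>. (\<alpha>, \<phi>) \<in> \<Gamma> \<and> \<alpha> \<subseteq> X}"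

definition computable_embedding :: "(basic set \<times> basic) set \<Rightarrow> struc set \<Rightarrow> struc set \<Rightarrow> bool" where
  "computable_embedding \<Gamma> K0 K1 \<longleftrightarrow> enum_op \<Gamma> \<and>
     (\<forall>A\<in>K0. \<exists>B\<in>K1. enum_apply \<Gamma> (diag A) = diag B) \<and>
     (\<forall>A\<in>K0. \<forall>B\<in>K0. \<forall>A' B'. is_struc A' \<longrightarrow> is_struc B' \<longrightarrow>
        enum_apply \<Gamma> (diag A) = diag A' \<longrightarrow> enum_apply \<Gamma> (diag B) = diag B' \<longrightarrow>
        (struc_iso A B \<longleftrightarrow> struc_iso A' B'))"

definition c_reducible :: "struc set \<Rightarrow> struc set \<Rightarrow> bool" (infix "\<le>\<^sub>c" 50) where
  "K0 \<le>\<^sub>c K1 \<longleftrightarrow> (\<exists>\<Gamma>. computable_embedding \<Gamma> K0 K1)"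

end

theory Submission
  imports Defs "HOL-Library.Multiset_Order"
begin

definition prs :: "nat \<Rightarrow> (nat list \<Rightarrow> nat) \<Rightarrow> bool" where
  "prs n F \<longleftrightarrow> (\<exists>f. prim_rec n f \<and> (\<forall>xs. length xs = n \<longrightarrow> f xs = F xs))"

lemma prs_cong: "prs n F \<Longrightarrow> (\<And>xs. length xs = n \<Longrightarrow> F xs = G xs) \<Longrightarrow> prs n G"
  unfolding prs_def by metis

lemma prs_zero: "prs n (\<lambda>_. 0)"
  unfolding prs_def using pr_zero by blast

lemma prs_succ1: "prs 1 (\<lambda>xs. Suc (hd xs))"
  unfolding prs_def using pr_succ by blast

lemma prs_proj: "i < n \<Longrightarrow> prs n (\<lambda>xs. xs ! i)"
  unfolding prs_def using pr_proj by blast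

lemma prs_list_witness:
  assumes "\<forall>H\<in>set Hs. prs n H"
  shows "\<exists>fs. length fs = length Hs \<and> (\<forall>h\<in>set fs. prim_rec n h)
     \<and> (\<forall>xs. length xs = n \<longrightarrow> map (\<lambda>h. h xs) fs = map (\<lambda>H. H xs) Hs)"
  using assms
proof (induction Hs)
  case Nil
  then show ?case by auto
next
  case (Cons H Hs)
  then obtain fs where fs: "length fs = length Hs" "\<forall>h\<in>set fs. prim_rec n h"
     "\<forall>xs. length xs = n \<longrightarrow> map (\<lambda>h. h xs) fs = map (\<lambda>H. H xs) Hs" by auto
  from Cons.prems obtain f where f: "prim_rec n f" "\<forall>xs. length xs = n \<longrightarrow> f xs = H xs"
    unfolding prs_def by auto
  show ?case
    by (rule exI[of _ "f # fs"]) (use fs f in auto)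
qed

lemma prs_comp:
  assumes "prs m G" "length Hs = m" "\<forall>H\<in>set Hs. prs n H"
  shows "prs n (\<lambda>xs. G (map (\<lambda>H. H xs) Hs))"
proof -
  obtain g where g: "prim_rec m g" "\<forall>xs. length xs = m \<longrightarrow> g xs = G xs"
    using assms(1) unfolding prs_def by auto
  obtain fs where fs: "length fs = length Hs" "\<forall>h\<in>set fs. prim_rec n h"
     "\<forall>xs. length xs = n \<longrightarrow> map (\<lambda>h. h xs) fs = map (\<lambda>H. H xs) Hs"
    using prs_list_witness[OF assms(3)] by auto
  have "prim_rec n (\<lambda>xs. g (map (\<lambda>h. h xs) fs))"
    by (rule pr_comp) (use g fs assms(2) in auto)
  moreover have "\<forall>xs. length xs = n \<longrightarrow> g (map (\<lambda>h. h xs) fs) = G (map (\<lambda>H. H xs) Hs)"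
    using g fs assms(2) by (metis length_map)
  ultimately show ?thesis unfolding prs_def by blast
qed

lemma prs_rec:
  assumes "prs n G" "prs (Suc (Suc n)) H"
  shows "prs (Suc n) (\<lambda>xs. rec_nat (G (tl xs)) (\<lambda>k r. H (k # r # tl xs)) (hd xs))"
proof -
  obtain g where g: "prim_rec n g" "\<forall>xs. length xs = n \<longrightarrow> g xs = G xs"
    using assms(1) unfolding prs_def by auto
  obtain h where h: "prim_rec (Suc (Suc n)) h" "\<forall>xs. length xs = Suc (Suc n) \<longrightarrow> h xs = H xs"
    using assms(2) unfolding prs_def by auto
  have "prim_rec (Suc n) (\<lambda>xs. rec_nat (g (tl xs)) (\<lambda>k r. h (k # r # tl xs)) (hd xs))"
    by (rule pr_rec) (use g h in auto)
  moreover have "rec_nat (g (tl xs)) (\<lambda>k r. h (k # r # tl xs)) m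
      = rec_nat (G (tl xs)) (\<lambda>k r. H (k # r # tl xs)) m" if "length xs = Suc n" for xs m
    using that g h by (induction m) auto
  ultimately show ?thesis unfolding prs_def by blast
qed

lemma prs_lift1:
  assumes "prs 1 G" "prs n F"
  shows "prs n (\<lambda>xs. G [F xs])"
  using prs_comp[OF assms(1), of "[F]" n] assms(2) by simp

lemma prs_lift2:
  assumes "prs 2 G" "prs n F1" "prs n F2"
  shows "prs n (\<lambda>xs. G [F1 xs, F2 xs])"
  using prs_comp[OF assms(1), of "[F1, F2]" n] assms(2,3) by simp

lemma prs_lift3:
  assumes "prs 3 G" "prs n F1" "prs n F2" "prs n F3"
  shows "prs n (\<lambda>xs. G [F1 xs, F2 xs, F3 xs])"
  using prs_comp[OF assms(1), of "[F1, F2, F3]" n] assms(2,3,4) by simp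

lemma prs_v0: "0 < n \<Longrightarrow> prs n hd"
  by (rule prs_cong[OF prs_proj[of 0 n]]) (auto simp: hd_conv_nth)

lemma prs_v1: "1 < n \<Longrightarrow> prs n (\<lambda>xs. hd (tl xs))"
  by (rule prs_cong[OF prs_proj[of 1 n]]) (auto simp: hd_conv_nth nth_tl neq_Nil_conv length_Suc_conv Suc_less_eq2)

lemma prs_v2: "2 < n \<Longrightarrow> prs n (\<lambda>xs. hd (tl (tl xs)))"
  by (rule prs_cong[OF prs_proj[of 2 n]]) (auto simp: numeral_2_eq_2 Suc_less_eq2 length_Suc_conv hd_conv_nth)

lemma prs_v3: "3 < n \<Longrightarrow> prs n (\<lambda>xs. hd (tl (tl (tl xs))))"
  by (rule prs_cong[OF prs_proj[of 3 n]]) (auto simp: numeral_3_eq_3 Suc_less_eq2 length_Suc_conv hd_conv_nth)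

lemma prs_gen1:
  assumes "prs 1 (\<lambda>xs. f (hd xs))" "prs n F"
  shows "prs n (\<lambda>xs. f (F xs))"
  using prs_lift1[OF assms] by simp

lemma prs_gen2:
  assumes "prs 2 (\<lambda>xs. f (hd xs) (hd (tl xs)))" "prs n F" "prs n G"
  shows "prs n (\<lambda>xs. f (F xs) (G xs))"
  using prs_lift2[OF assms] by simp

lemma prs_gen3:
  assumes "prs 3 (\<lambda>xs. f (hd xs) (hd (tl xs)) (hd (tl (tl xs))))" "prs n F" "prs n G" "prs n H"
  shows "prs n (\<lambda>xs. f (F xs) (G xs) (H xs))"
  using prs_lift3[OF assms] by simp

lemma prs_Suc: "prs n F \<Longrightarrow> prs n (\<lambda>xs. Suc (F xs))"
  by (rule prs_gen1[OF prs_succ1])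

lemma prs_const: "prs n (\<lambda>_. k)"
  by (induction k) (auto intro: prs_zero dest: prs_Suc)

lemma prs_rec0:
  assumes "prs 2 (\<lambda>xs. h (hd xs) (hd (tl xs)))"
  shows "prs 1 (\<lambda>xs. rec_nat c h (hd xs))"
  using prs_rec[OF prs_const[of 0 c] assms[simplified numeral_2_eq_2]] by simp

lemma prs_rec1:
  assumes "prs 1 (\<lambda>xs. g (hd xs))" "prs 3 (\<lambda>xs. h (hd xs) (hd (tl xs)) (hd (tl (tl xs))))"
  shows "prs 2 (\<lambda>xs. rec_nat (g (hd (tl xs))) (\<lambda>k r. h k r (hd (tl xs))) (hd xs))"
  using prs_rec[of 1 "\<lambda>xs. g (hd xs)" "\<lambda>xs. h (hd xs) (hd (tl xs)) (hd (tl (tl xs)))"]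
    assms by (simp add: numeral_2_eq_2 numeral_3_eq_3)

lemma prs_args_comp:
  assumes "prs m S" "\<forall>j<m. prs n (H j)"
  shows "prs n (\<lambda>xs. S (map (\<lambda>j. H j xs) [0..<m]))"
  using prs_comp[OF assms(1), of "map H [0..<m]" n] assms(2) by (auto simp: comp_def)

lemma prs_cons_args:
  assumes "prs (Suc n) S" "prs n B"
  shows "prs n (\<lambda>xs. S (B xs # xs))"
proof -
  let ?H = "\<lambda>j xs. if j = 0 then B xs else xs ! (j - 1)"
  have A: "prs n (\<lambda>xs. S (map (\<lambda>j. ?H j xs) [0..<Suc n]))"
    apply (rule prs_args_comp[OF assms(1)])
    apply (intro allI impI)
    subgoal for j by (cases j) (auto intro: assms(2) prs_proj)
    done
  have E: "map (\<lambda>j. ?H j xs) [0..<Suc n] = B xs # xs" if "length xs = n" for xs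
    using that by (simp add: map_upt_Suc del: upt_Suc) (metis map_nth)
  show ?thesis by (rule prs_cong[OF A]) (simp only: E)
qed

lemma prs_skip1:
  assumes "prs (Suc n) S"
  shows "prs (Suc (Suc n)) (\<lambda>zs. S (hd zs # tl (tl zs)))"
proof -
  let ?H = "\<lambda>j zs. if j = 0 then zs ! 0 else zs ! (j + 1)"
  have A: "prs (Suc (Suc n)) (\<lambda>xs. S (map (\<lambda>j. ?H j xs) [0..<Suc n]))"
    apply (rule prs_args_comp[OF assms(1)])
    apply (intro allI impI)
    subgoal for j by (cases j) (auto intro: prs_proj)
    done
  have E: "map (\<lambda>j. ?H j zs) [0..<Suc n] = hd zs # tl (tl zs)" if L: "length zs = Suc (Suc n)" for zs
  proof -
    obtain a b ys where zs: "zs = a # b # ys" "length ys = n"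
      using L by (cases zs; cases "tl zs") auto
    show ?thesis using zs by (simp add: map_upt_Suc del: upt_Suc) (metis map_nth)
  qed
  show ?thesis by (rule prs_cong[OF A]) (simp only: E)
qed

lemma rec_nat_helper:
  "rec_nat y (\<lambda>k r. Suc r) (x::nat) = x + y"
  "rec_nat 0 (\<lambda>k r. r + y) x = x * y"
  "rec_nat 0 (\<lambda>k r. k) x = x - 1"
  "rec_nat y (\<lambda>k r. r - 1) x = y - x"
  "rec_nat 0 (\<lambda>k r. 1) x = of_bool (0 < x)"
  "rec_nat 0 (\<lambda>k r. r + F k) x = (\<Sum>i<x. F i)"
  by (induct x) auto

lemma prs_add2: "prs 2 (\<lambda>xs. hd xs + hd (tl xs))"
proof -
  have "prs 2 (\<lambda>xs. rec_nat (hd (tl xs)) (\<lambda>k r. Suc r) (hd xs))"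
    using prs_rec1[of "\<lambda>x. x" "\<lambda>k r y. Suc r"] prs_v0[of 1] prs_Suc[OF prs_v1[of 3]] by simp
  then show ?thesis by (rule prs_cong) (rule rec_nat_helper)
qed

lemma prs_add[intro]: "prs n F \<Longrightarrow> prs n G \<Longrightarrow> prs n (\<lambda>xs. F xs + G xs)"
  by (rule prs_gen2[OF prs_add2])

lemma prs_mult2: "prs 2 (\<lambda>xs. hd xs * hd (tl xs))"
proof -
  have "prs 2 (\<lambda>xs. rec_nat 0 (\<lambda>k r. r + hd (tl xs)) (hd xs))"
    using prs_rec1[of "\<lambda>x. 0" "\<lambda>k r y. r + y"] prs_const[of 1 0] prs_add[OF prs_v1[of 3] prs_v2[of 3]] by simp
  then show ?thesis by (rule prs_cong) (rule rec_nat_helper)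
qed

lemma prs_mult[intro]: "prs n F \<Longrightarrow> prs n G \<Longrightarrow> prs n (\<lambda>xs. F xs * G xs)"
  by (rule prs_gen2[OF prs_mult2])

lemma prs_pred1: "prs 1 (\<lambda>xs. hd xs - 1)"
proof -
  have "prs 1 (\<lambda>xs. rec_nat 0 (\<lambda>k r. k) (hd xs))"
    using prs_rec0[of "\<lambda>k r. k" 0] prs_v0[of 2] by simp
  then show ?thesis by (rule prs_cong) (rule rec_nat_helper)
qed

lemma prs_monus2: "prs 2 (\<lambda>xs. hd (tl xs) - hd xs)"
proof -
  have "prs 2 (\<lambda>xs. rec_nat (hd (tl xs)) (\<lambda>k r. r - 1) (hd xs))"
    using prs_rec1[of "\<lambda>x. x" "\<lambda>k r y. r - 1"] prs_v0[of 1] prs_gen1[OF prs_pred1 prs_v1[of 3]] by simp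
  then show ?thesis by (rule prs_cong) (rule rec_nat_helper)
qed

lemma prs_minus[intro]: "prs n F \<Longrightarrow> prs n G \<Longrightarrow> prs n (\<lambda>xs. F xs - G xs)"
  using prs_gen2[OF prs_monus2, of n G F] by simp

lemma prs_sg1: "prs 1 (\<lambda>xs. of_bool (0 < hd xs))"
proof -
  have "prs 1 (\<lambda>xs. rec_nat 0 (\<lambda>k r. 1) (hd xs))"
    using prs_rec0[of "\<lambda>k r. 1" 0] prs_const[of 2 1] by simp
  then show ?thesis by (rule prs_cong) (rule rec_nat_helper)
qed

lemma prs_sg[intro]: "prs n F \<Longrightarrow> prs n (\<lambda>xs. of_bool (0 < F xs))"
  by (rule prs_gen1[OF prs_sg1])

lemma prs_less[intro]: "prs n F \<Longrightarrow> prs n G \<Longrightarrow> prs n (\<lambda>xs. of_bool (F xs < G xs))"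
  using prs_sg[OF prs_minus, of n G F] by simp

lemma prs_not[intro]: "prs n (\<lambda>xs. of_bool (P xs)) \<Longrightarrow> prs n (\<lambda>xs. of_bool (\<not> P xs))"
  using prs_minus[OF prs_const[of n 1], of "\<lambda>xs. of_bool (P xs)"] by (rule prs_cong) auto

lemma prs_and[intro]: "prs n (\<lambda>xs. of_bool (P xs)) \<Longrightarrow> prs n (\<lambda>xs. of_bool (Q xs))
   \<Longrightarrow> prs n (\<lambda>xs. of_bool (P xs \<and> Q xs))"
  using prs_mult[of n "\<lambda>xs. of_bool (P xs)" "\<lambda>xs. of_bool (Q xs)"] by (rule prs_cong) auto

lemma prs_or[intro]: "prs n (\<lambda>xs. of_bool (P xs)) \<Longrightarrow> prs n (\<lambda>xs. of_bool (Q xs))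
   \<Longrightarrow> prs n (\<lambda>xs. of_bool (P xs \<or> Q xs))"
  using prs_not[OF prs_and[OF prs_not prs_not], of n P Q] by simp

lemma prs_imp[intro]: "prs n (\<lambda>xs. of_bool (P xs)) \<Longrightarrow> prs n (\<lambda>xs. of_bool (Q xs))
   \<Longrightarrow> prs n (\<lambda>xs. of_bool (P xs \<longrightarrow> Q xs))"
  using prs_or[OF prs_not, of n P Q] by simp

lemma prs_le[intro]: "prs n F \<Longrightarrow> prs n G \<Longrightarrow> prs n (\<lambda>xs. of_bool (F xs \<le> G xs))"
  using prs_not[OF prs_less, of n G F] by (simp add: not_less)

lemma prs_eq[intro]: "prs n F \<Longrightarrow> prs n G \<Longrightarrow> prs n (\<lambda>xs. of_bool (F xs = G xs))"
  using prs_and[OF prs_le prs_le, of n F G G F] by (rule prs_cong) auto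

lemma prs_neq[intro]: "prs n F \<Longrightarrow> prs n G \<Longrightarrow> prs n (\<lambda>xs. of_bool (F xs \<noteq> G xs))"
  by (rule prs_not[OF prs_eq])

lemma prs_if[intro]: "prs n (\<lambda>xs. of_bool (P xs)) \<Longrightarrow> prs n A \<Longrightarrow> prs n B
   \<Longrightarrow> prs n (\<lambda>xs. if P xs then A xs else B xs)"
proof -
  assume a: "prs n (\<lambda>xs. of_bool (P xs))" "prs n A" "prs n B"
  have "prs n (\<lambda>xs. of_bool (P xs) * A xs + of_bool (\<not> P xs) * B xs)"
    using a by (intro prs_add prs_mult prs_not)
  then show ?thesis by (rule prs_cong) auto
qed

lemma prs_sum_hd:
  assumes "prs (Suc n) (\<lambda>ys. F (hd ys) (tl ys))"
  shows "prs (Suc n) (\<lambda>ys. \<Sum>i<hd ys. F i (tl ys))"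
proof -
  have H: "prs (Suc (Suc n)) (\<lambda>zs. hd (tl zs) + F (hd zs) (tl (tl zs)))"
    using prs_add[OF prs_v1 prs_skip1[OF assms]] by simp
  have "prs (Suc n) (\<lambda>xs. rec_nat 0 (\<lambda>k r. r + F k (tl xs)) (hd xs))"
    using prs_rec[OF prs_const[of n 0] H] by (simp add: add.commute)
  then show ?thesis by (rule prs_cong) (rule rec_nat_helper)
qed

lemma prs_sum[intro]:
  assumes "prs (Suc n) (\<lambda>ys. F (hd ys) (tl ys))" "prs n B"
  shows "prs n (\<lambda>xs. \<Sum>i<B xs. F i xs)"
  using prs_cons_args[OF prs_sum_hd[OF assms(1)] assms(2)] by simp

lemma sum_of_bool_pos: "(0 < (\<Sum>i<(B::nat). of_bool (P i)::nat)) = (\<exists>i<B. P i)"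
  by (induct B) (auto simp: less_Suc_eq)

lemma prs_bex[intro]:
  assumes "prs (Suc n) (\<lambda>ys. of_bool (P (hd ys) (tl ys)))" "prs n B"
  shows "prs n (\<lambda>xs. of_bool (\<exists>i<B xs. P i xs))"
  using prs_sg[OF prs_sum[OF assms]] by (rule prs_cong) (simp only: sum_of_bool_pos)

lemma prs_ball[intro]:
  assumes "prs (Suc n) (\<lambda>ys. of_bool (P (hd ys) (tl ys)))" "prs n B"
  shows "prs n (\<lambda>xs. of_bool (\<forall>i<B xs. P i xs))"
  using prs_not[OF prs_bex[OF prs_not[OF assms(1)] assms(2)]] by simp

definition bmu :: "nat \<Rightarrow> (nat \<Rightarrow> bool) \<Rightarrow> nat" where
  "bmu B P = (\<Sum>j<B. of_bool (\<forall>i<Suc j. \<not> P i))"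

lemma prs_bmu[intro]:
  assumes "prs (Suc n) (\<lambda>ys. of_bool (P (hd ys) (tl ys)))" "prs n B"
  shows "prs n (\<lambda>xs. bmu (B xs) (\<lambda>i. P i xs))"
proof -
  have "prs (Suc (Suc n)) (\<lambda>zs. of_bool (P (hd zs) (tl (tl zs))))"
    using prs_skip1[OF assms(1)] by simp
  then have "prs (Suc n) (\<lambda>ys. of_bool (\<forall>i<Suc (hd ys). \<not> P i (tl ys)))"
    using prs_ball[OF prs_not, of "Suc n" "\<lambda>i ys. P i (tl ys)" "\<lambda>ys. Suc (hd ys)"] prs_Suc[OF prs_v0]
    by simp
  then show ?thesis unfolding bmu_def using assms(2) by (rule prs_sum)
qed

lemma bmu_prop:
  assumes "i < B" "P i"
  shows "bmu B P < B \<and> P (bmu B P) \<and> (\<forall>j<bmu B P. \<not> P j)"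
proof -
  let ?m = "LEAST i. P i"
  have m: "P ?m" "?m \<le> i" using assms by (auto intro: LeastI Least_le)
  have nl: "\<not> P k" if "k < ?m" for k using that by (rule not_less_Least)
  have "{j. j < B \<and> (\<forall>i<Suc j. \<not> P i)} = {..<?m}"
  proof (intro set_eqI iffI)
    fix j assume "j \<in> {j. j < B \<and> (\<forall>i<Suc j. \<not> P i)}"
    then have "\<not> P i" if "i \<le> j" for i using that by auto
    then show "j \<in> {..<?m}" using m(1) by (metis lessThan_iff not_le)
  next
    fix j assume "j \<in> {..<?m}"
    then have jm: "j < ?m" by simp
    have "j < B" using jm m(2) assms(1) by linarith
    moreover have "\<not> P i" if "i < Suc j" for i
      using that jm by (intro nl) linarith
    ultimately show "j \<in> {j. j < B \<and> (\<forall>i<Suc j. \<not> P i)}" by blast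
  qed
  then have bm: "bmu B P = ?m"
    unfolding bmu_def by (simp add: sum.If_cases Int_def)
  show ?thesis
  proof (intro conjI allI impI)
    show "bmu B P < B" using bm m(2) assms(1) by linarith
    show "P (bmu B P)" using bm m(1) by simp
    fix j assume "j < bmu B P"
    then show "\<not> P j" using bm nl by metis
  qed
qed

lemma prs_tri1: "prs 1 (\<lambda>xs. triangle (hd xs))"
proof -
  have "prs 1 (\<lambda>xs. rec_nat 0 (\<lambda>k r. r + Suc k) (hd xs))"
    using prs_rec0[of "\<lambda>k r. r + Suc k" 0] prs_add[OF prs_v1 prs_Suc[OF prs_v0], of 2] by simp
  moreover have "rec_nat 0 (\<lambda>k r. r + Suc k) x = triangle x" for x by (induct x) auto
  ultimately show ?thesis by simp
qed

lemma prs_tri[intro]: "prs n F \<Longrightarrow> prs n (\<lambda>xs. triangle (F xs))"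
  by (rule prs_gen1[OF prs_tri1])

lemma prs_pe[intro]: "prs n F \<Longrightarrow> prs n G \<Longrightarrow> prs n (\<lambda>xs. prod_encode (F xs, G xs))"
  unfolding prod_encode_def by (simp only: case_prod_conv) (intro prs_add prs_tri)

lemma pfst_bmu: "fst (prod_decode x) = bmu (Suc x) (\<lambda>a. \<exists>b<Suc x. prod_encode (a, b) = x)"
proof -
  obtain a0 b0 where ab: "prod_decode x = (a0, b0)" by (cases "prod_decode x")
  then have e: "prod_encode (a0, b0) = x" by (metis prod_decode_inverse)
  have le: "a0 < Suc x" "b0 < Suc x" using e le_prod_encode_1[of a0 b0] le_prod_encode_2[of b0 a0] by auto
  from bmu_prop[of a0 "Suc x" "\<lambda>a. \<exists>b<Suc x. prod_encode (a, b) = x"] le e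
  obtain b where "prod_encode (bmu (Suc x) (\<lambda>a. \<exists>b<Suc x. prod_encode (a, b) = x), b) = x" by blast
  then have "prod_decode x = (bmu (Suc x) (\<lambda>a. \<exists>b<Suc x. prod_encode (a, b) = x), b)"
    by (auto dest: arg_cong[where f=prod_decode])
  then show ?thesis by simp
qed

lemma psnd_bmu: "snd (prod_decode x) = bmu (Suc x) (\<lambda>b. \<exists>a<Suc x. prod_encode (a, b) = x)"
proof -
  obtain a0 b0 where ab: "prod_decode x = (a0, b0)" by (cases "prod_decode x")
  then have e: "prod_encode (a0, b0) = x" by (metis prod_decode_inverse)
  have le: "a0 < Suc x" "b0 < Suc x" using e le_prod_encode_1[of a0 b0] le_prod_encode_2[of b0 a0] by auto
  from bmu_prop[of b0 "Suc x" "\<lambda>b. \<exists>a<Suc x. prod_encode (a, b) = x"] le e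
  obtain a where "prod_encode (a, bmu (Suc x) (\<lambda>b. \<exists>a<Suc x. prod_encode (a, b) = x)) = x" by blast
  then have "prod_decode x = (a, bmu (Suc x) (\<lambda>b. \<exists>a<Suc x. prod_encode (a, b) = x))"
    by (auto dest: arg_cong[where f=prod_decode])
  then show ?thesis by simp
qed

lemma prs_pfst1: "prs 1 (\<lambda>xs. fst (prod_decode (hd xs)))"
  unfolding pfst_bmu
  by (intro prs_bmu prs_bex prs_eq prs_pe prs_Suc prs_v0 prs_v1 prs_v2) auto

lemma prs_psnd1: "prs 1 (\<lambda>xs. snd (prod_decode (hd xs)))"
  unfolding psnd_bmu
  by (intro prs_bmu prs_bex prs_eq prs_pe prs_Suc prs_v0 prs_v1 prs_v2) auto

lemma prs_pfst[intro]: "prs n F \<Longrightarrow> prs n (\<lambda>xs. fst (prod_decode (F xs)))"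
  by (rule prs_gen1[OF prs_pfst1])

lemma prs_psnd[intro]: "prs n F \<Longrightarrow> prs n (\<lambda>xs. snd (prod_decode (F xs)))"
  by (rule prs_gen1[OF prs_psnd1])

definition lhd :: "nat \<Rightarrow> nat" where "lhd c = fst (prod_decode (c - 1))"
definition ltl :: "nat \<Rightarrow> nat" where "ltl c = snd (prod_decode (c - 1))"
definition ltls :: "nat \<Rightarrow> nat \<Rightarrow> nat" where "ltls k c = (ltl ^^ k) c"
definition lnth :: "nat \<Rightarrow> nat \<Rightarrow> nat" where "lnth i c = lhd (ltls i c)"
definition llen :: "nat \<Rightarrow> nat" where "llen c = bmu (Suc c) (\<lambda>k. ltls k c = 0)"

lemma prs_lhd[intro]: "prs n F \<Longrightarrow> prs n (\<lambda>xs. lhd (F xs))"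
  unfolding lhd_def by (intro prs_pfst prs_minus prs_const)

lemma prs_ltl[intro]: "prs n F \<Longrightarrow> prs n (\<lambda>xs. ltl (F xs))"
  unfolding ltl_def by (intro prs_psnd prs_minus prs_const)

lemma prs_ltls2: "prs 2 (\<lambda>xs. ltls (hd xs) (hd (tl xs)))"
proof -
  have "prs 2 (\<lambda>xs. rec_nat (hd (tl xs)) (\<lambda>k r. ltl r) (hd xs))"
    using prs_rec1[of "\<lambda>x. x" "\<lambda>k r y. ltl r"] prs_v0[of 1] prs_ltl[OF prs_v1[of 3]] by simp
  moreover have "rec_nat c (\<lambda>k r. ltl r) k = ltls k c" for k c
    unfolding ltls_def by (induct k) auto
  ultimately show ?thesis by simp
qed

lemma prs_ltls[intro]: "prs n F \<Longrightarrow> prs n G \<Longrightarrow> prs n (\<lambda>xs. ltls (F xs) (G xs))"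
  by (rule prs_gen2[OF prs_ltls2])

lemma prs_lnth[intro]: "prs n F \<Longrightarrow> prs n G \<Longrightarrow> prs n (\<lambda>xs. lnth (F xs) (G xs))"
  unfolding lnth_def by (intro prs_lhd prs_ltls)

lemma prs_llen1: "prs 1 (\<lambda>xs. llen (hd xs))"
  unfolding llen_def by (intro prs_bmu prs_eq prs_ltls prs_Suc prs_v0 prs_v1 prs_const) auto

lemma prs_llen[intro]: "prs n F \<Longrightarrow> prs n (\<lambda>xs. llen (F xs))"
  by (rule prs_gen1[OF prs_llen1])

lemma pd0: "prod_decode 0 = (0, 0)"
proof -
  have "prod_encode (0, 0) = 0" by (simp add: prod_encode_def)
  then show ?thesis by (metis prod_encode_inverse)
qed

lemma ltl_code: "ltl (list_encode xs) = list_encode (tl xs)"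
  by (cases xs) (auto simp: ltl_def pd0)

lemma lhd_code: "xs \<noteq> [] \<Longrightarrow> lhd (list_encode xs) = hd xs"
  by (cases xs) (auto simp: lhd_def)

lemma ltls_code: "ltls k (list_encode xs) = list_encode (drop k xs)"
  unfolding ltls_def
  by (induct k arbitrary: xs) (simp_all add: funpow_Suc_right ltl_code drop_Suc del: funpow.simps)

lemma lnth_code: "i < length xs \<Longrightarrow> lnth i (list_encode xs) = xs ! i"
  by (simp add: lnth_def ltls_code lhd_code hd_drop_conv_nth)

lemma length_le_code: "length xs \<le> list_encode xs"
  by (induct xs) (auto intro: le_trans[OF _ le_prod_encode_2])

lemma llen_code: "llen (list_encode xs) = length xs"
proof -
  have P: "(ltls k (list_encode xs) = 0) = (length xs \<le> k)" for k
    by (simp add: ltls_code) (metis list_encode.simps(1) list_encode_eq drop_eq_Nil)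
  let ?B = "Suc (list_encode xs)"
  have "length xs < ?B" using length_le_code[of xs] by simp
  from bmu_prop[of "length xs" ?B "\<lambda>k. ltls k (list_encode xs) = 0", OF this]
  have "length xs \<le> llen (list_encode xs)" "\<forall>j<llen (list_encode xs). \<not> length xs \<le> j"
    unfolding llen_def P by auto
  then show ?thesis by (meson le_antisym le_refl not_le_imp_less)
qed

lemma div_bmu: "y > 0 \<Longrightarrow> (x::nat) div y = bmu (Suc x) (\<lambda>q. x < (q + 1) * y)"
proof -
  assume y: "y > 0"
  have P: "x < (x div y + 1) * y" using y
    using dividend_less_times_div[OF y, of x] by (simp add: algebra_simps)
  have "x div y < Suc x" by (simp add: le_imp_less_Suc div_le_dividend)
  from bmu_prop[of "x div y" "Suc x" "\<lambda>q. x < (q + 1) * y", OF this P]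
  have A: "x < (bmu (Suc x) (\<lambda>q. x < (q + 1) * y) + 1) * y"
    and B: "\<forall>j<bmu (Suc x) (\<lambda>q. x < (q + 1) * y). \<not> x < (j + 1) * y" by auto
  have "x div y \<le> bmu (Suc x) (\<lambda>q. x < (q + 1) * y)"
    using A y by (simp add: less_Suc_eq_le[symmetric] div_less_iff_less_mult)
  moreover have "\<not> x div y < bmu (Suc x) (\<lambda>q. x < (q + 1) * y)" using B P by blast
  ultimately show ?thesis by simp
qed

lemma prs_tl[intro]:
  assumes "prs n F" shows "prs (Suc n) (\<lambda>xs. F (tl xs))"
proof -
  have A: "prs (Suc n) (\<lambda>xs. F (map (\<lambda>j. xs ! (j + 1)) [0..<n]))"
    by (rule prs_args_comp[OF assms]) (auto intro: prs_proj)
  have E: "map (\<lambda>j. xs ! (j + 1)) [0..<n] = tl xs" if "length xs = Suc n" for xs :: "nat list"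
    using that by (intro nth_equalityI) (auto simp: nth_tl)
  show ?thesis by (rule prs_cong[OF A]) (simp only: E)
qed

lemma prs_div[intro]: "prs n F \<Longrightarrow> prs n G \<Longrightarrow> prs n (\<lambda>xs. F xs div G xs)"
proof -
  assume a: "prs n F" "prs n G"
  have "prs n (\<lambda>xs. if G xs = 0 then 0 else bmu (Suc (F xs)) (\<lambda>q. F xs < (q + 1) * G xs))"
    using a by (intro prs_if prs_eq prs_bmu prs_less prs_mult prs_add prs_const prs_Suc prs_v0 prs_tl) auto
  then show ?thesis by (rule prs_cong) (auto simp: div_bmu)
qed

lemma pd0': "prod_decode 0 = (0, 0)" by (rule pd0)

lemma prs_pow2_1: "prs 1 (\<lambda>xs. 2 ^ hd xs)"
proof -
  have "prs 1 (\<lambda>xs. rec_nat 1 (\<lambda>k r. r + r) (hd xs))"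
    using prs_rec0[of "\<lambda>k r. r + r" 1] prs_add[OF prs_v1 prs_v1, of 2] by simp
  moreover have "rec_nat 1 (\<lambda>k r. r + r) x = (2::nat) ^ x" for x by (induct x) auto
  ultimately show ?thesis by simp
qed

lemma prs_pow2[intro]: "prs n F \<Longrightarrow> prs n (\<lambda>xs. 2 ^ F xs)"
  by (rule prs_gen1[OF prs_pow2_1])

lemma prs_mod[intro]: "prs n F \<Longrightarrow> prs n G \<Longrightarrow> prs n (\<lambda>xs. F xs mod G xs)"
proof -
  assume a: "prs n F" "prs n G"
  have "prs n (\<lambda>xs. F xs - G xs * (F xs div G xs))" using a by (intro prs_minus prs_mult prs_div)
  then show ?thesis by (rule prs_cong) (simp add: minus_mult_div_eq_mod)
qed

lemma prs_mem[intro]: "prs n F \<Longrightarrow> prs n G \<Longrightarrow> prs n (\<lambda>xs. of_bool (F xs \<in> set_decode (G xs)))"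
proof -
  assume a: "prs n F" "prs n G"
  have "prs n (\<lambda>xs. of_bool ((G xs div 2 ^ F xs) mod 2 = 1))"
    using a by (intro prs_eq prs_mod prs_div prs_pow2 prs_const)
  then show ?thesis by (rule prs_cong) (simp add: set_decode_def odd_iff_mod_2_eq_one)
qed

section \<open>The operator\<close>

definition vl :: "nat list \<Rightarrow> bool" where
  "vl xs \<longleftrightarrow> xs \<noteq> [] \<and> length xs = Suc (hd xs)"

definition fd :: "nat list \<Rightarrow> nat list \<Rightarrow> nat" where
  "fd xs ys = (LEAST i. i < length xs \<and> i < length ys \<and> xs ! i \<noteq> ys ! i)"

definition eqs :: "nat list \<Rightarrow> basic set" where
  "eqs xs = (\<lambda>z. Pos (Eq z z)) ` set xs"

definition gok :: "basic set \<Rightarrow> basic \<Rightarrow> bool" where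
  "gok \<alpha> \<phi> \<longleftrightarrow>
     (\<exists>xs. vl xs \<and> \<phi> = Pos (Eq (list_encode xs) (list_encode xs)) \<and> eqs xs \<subseteq> \<alpha>)
   \<or> (\<exists>xs ys. vl xs \<and> vl ys \<and> xs \<noteq> ys \<and> \<phi> = Neg (Eq (list_encode xs) (list_encode ys))
        \<and> eqs xs \<union> eqs ys \<subseteq> \<alpha>)
   \<or> (\<exists>xs ys. vl xs \<and> vl ys \<and> xs \<noteq> ys \<and> \<phi> = Pos (Lt (list_encode xs) (list_encode ys))
        \<and> eqs xs \<union> eqs ys \<subseteq> \<alpha> \<and> Pos (Lt (xs ! fd xs ys) (ys ! fd xs ys)) \<in> \<alpha>)
   \<or> (\<exists>xs ys. vl xs \<and> vl ys \<and> \<phi> = Neg (Lt (list_encode xs) (list_encode ys))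
        \<and> eqs xs \<union> eqs ys \<subseteq> \<alpha> \<and> (xs = ys \<or> Neg (Lt (xs ! fd xs ys) (ys ! fd xs ys)) \<in> \<alpha>))"

definition Gam :: "(basic set \<times> basic) set" where
  "Gam = {(\<alpha>, \<phi>). finite \<alpha> \<and> gok \<alpha> \<phi>}"

lemma fd_props:
  assumes "vl xs" "vl ys" "xs \<noteq> ys"
  shows "fd xs ys < length xs \<and> fd xs ys < length ys \<and> xs ! fd xs ys \<noteq> ys ! fd xs ys
     \<and> (\<forall>j<fd xs ys. xs ! j = ys ! j)"
proof -
  have ex: "\<exists>i. i < length xs \<and> i < length ys \<and> xs ! i \<noteq> ys ! i"
  proof (cases "hd xs = hd ys")
    case True
    then have len: "length xs = length ys" using assms(1,2) by (simp add: vl_def)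
    show ?thesis
    proof (rule ccontr)
      assume "\<not> ?thesis"
      then have "\<forall>i<length xs. xs ! i = ys ! i" using len by auto
      then have "xs = ys" using len by (simp add: list_eq_iff_nth_eq)
      then show False using assms(3) by simp
    qed
  next
    case False
    then show ?thesis using assms(1,2) by (intro exI[of _ 0]) (auto simp: vl_def hd_conv_nth)
  qed
  let ?P = "\<lambda>i. i < length xs \<and> i < length ys \<and> xs ! i \<noteq> ys ! i"
  have a: "?P (fd xs ys)" unfolding fd_def using ex by (rule LeastI_ex)
  have b: "xs ! j = ys ! j" if "j < fd xs ys" for j
  proof -
    have "\<not> ?P j" using that unfolding fd_def by (rule not_less_Least)
    then show ?thesis using a that by auto
  qed
  show ?thesis using a b by blast
qed

lemma fd_unique:
  assumes "i < length xs" "i < length ys" "xs ! i \<noteq> ys ! i" "\<forall>j<i. xs ! j = ys ! j"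
  shows "fd xs ys = i"
  unfolding fd_def using assms by (intro Least_equality) (auto simp: not_less[symmetric])

lemma fd_sym: "fd xs ys = fd ys xs"
  unfolding fd_def by metis

definition cV :: "nat \<Rightarrow> bool" where
  "cV c \<longleftrightarrow> 0 < c \<and> llen c = Suc (lhd c)"

definition cAE :: "nat \<Rightarrow> nat \<Rightarrow> bool" where
  "cAE s c \<longleftrightarrow> (\<forall>i<llen c. basic_code (Pos (Eq (lnth i c) (lnth i c))) \<in> set_decode s)"

definition cFD :: "nat \<Rightarrow> nat \<Rightarrow> nat" where
  "cFD c d = bmu (llen c) (\<lambda>i. lnth i c \<noteq> lnth i d)"

definition Pred :: "nat \<Rightarrow> bool" where
  "Pred x \<longleftrightarrow> (let s = fst (prod_decode x); b = snd (prod_decode x); a = b div 2; p = a div 2;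
      c = fst (prod_decode p); d = snd (prod_decode p) in
     (b mod 2 = 0 \<and> a mod 2 = 1 \<and> c = d \<and> cV c \<and> cAE s c)
   \<or> (b mod 2 = 1 \<and> a mod 2 = 1 \<and> c \<noteq> d \<and> cV c \<and> cV d \<and> cAE s c \<and> cAE s d)
   \<or> (b mod 2 = 0 \<and> a mod 2 = 0 \<and> c \<noteq> d \<and> cV c \<and> cV d \<and> cAE s c \<and> cAE s d
       \<and> basic_code (Pos (Lt (lnth (cFD c d) c) (lnth (cFD c d) d))) \<in> set_decode s)
   \<or> (b mod 2 = 1 \<and> a mod 2 = 0 \<and> cV c \<and> cV d \<and> cAE s c \<and> cAE s d
       \<and> (c = d \<or> basic_code (Neg (Lt (lnth (cFD c d) c) (lnth (cFD c d) d))) \<in> set_decode s)))"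

lemma prs_bc1[intro]:
  assumes "prs n F" "prs n G" shows "prs n (\<lambda>xs. basic_code (Pos (Eq (F xs) (G xs))))"
proof -
  have "prs n (\<lambda>xs. 2 * (2 * prod_encode (F xs, G xs) + 1))"
    using assms by (intro prs_mult prs_add prs_pe prs_const)
  then show ?thesis by simp
qed

lemma prs_bc2[intro]:
  assumes "prs n F" "prs n G" shows "prs n (\<lambda>xs. basic_code (Pos (Lt (F xs) (G xs))))"
proof -
  have "prs n (\<lambda>xs. 2 * (2 * prod_encode (F xs, G xs)))"
    using assms by (intro prs_mult prs_add prs_pe prs_const)
  then show ?thesis by simp
qed

lemma prs_bc3[intro]:
  assumes "prs n F" "prs n G" shows "prs n (\<lambda>xs. basic_code (Neg (Lt (F xs) (G xs))))"
proof -
  have "prs n (\<lambda>xs. 2 * (2 * prod_encode (F xs, G xs)) + 1)"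
    using assms by (intro prs_mult prs_add prs_pe prs_const)
  then show ?thesis by simp
qed

lemmas prs_bc = prs_bc1 prs_bc2 prs_bc3

lemma prs_cV1: "prs 1 (\<lambda>xs. of_bool (cV (hd xs)))"
  unfolding cV_def
  apply (intro prs_and prs_eq prs_less prs_llen prs_lhd prs_Suc prs_const prs_v0)
  apply auto
  done

lemma prs_cV[intro]: "prs n F \<Longrightarrow> prs n (\<lambda>xs. of_bool (cV (F xs)))"
  by (rule prs_gen1[OF prs_cV1])

lemma prs_cAE2: "prs 2 (\<lambda>xs. of_bool (cAE (hd xs) (hd (tl xs))))"
  unfolding cAE_def
  apply (intro prs_ball prs_mem prs_bc prs_lnth prs_llen prs_const prs_v0 prs_v1 prs_v2)
  apply auto
  done

lemma prs_cAE[intro]: "prs n F \<Longrightarrow> prs n G \<Longrightarrow> prs n (\<lambda>xs. of_bool (cAE (F xs) (G xs)))"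
  by (rule prs_gen2[OF prs_cAE2])

lemma prs_cFD2: "prs 2 (\<lambda>xs. cFD (hd xs) (hd (tl xs)))"
  unfolding cFD_def
  apply (intro prs_bmu prs_neq prs_lnth prs_llen prs_v0 prs_v1 prs_v2)
  apply auto
  done

lemma prs_cFD[intro]: "prs n F \<Longrightarrow> prs n G \<Longrightarrow> prs n (\<lambda>xs. cFD (F xs) (G xs))"
  by (rule prs_gen2[OF prs_cFD2])

lemma prs_Pred: "prs 1 (\<lambda>xs. of_bool (Pred (hd xs)))"
  unfolding Pred_def Let_def
  apply (intro prs_or prs_and prs_eq prs_neq prs_mem prs_mod prs_div prs_pfst prs_psnd
      prs_cV prs_cAE prs_cFD prs_lnth prs_bc prs_const prs_v0)
  apply auto
  done

definition adec :: "nat \<Rightarrow> atom" where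
  "adec m = (if even m then Lt (fst (prod_decode (m div 2))) (snd (prod_decode (m div 2)))
             else Eq (fst (prod_decode (m div 2))) (snd (prod_decode (m div 2))))"

definition bdec :: "nat \<Rightarrow> basic" where
  "bdec n = (if even n then Pos (adec (n div 2)) else Neg (adec (n div 2)))"

lemma atom_code_adec: "atom_code (adec m) = m"
  unfolding adec_def by auto

lemma basic_code_bdec: "basic_code (bdec n) = n"
  unfolding bdec_def by (auto simp: atom_code_adec)

lemma adec_atom_code: "adec (atom_code a) = a"
  by (cases a) (auto simp: adec_def)

lemma bdec_basic_code: "bdec (basic_code b) = b"
  by (cases b) (auto simp: bdec_def adec_atom_code)

lemma inj_basic_code: "inj basic_code"
  by (metis bdec_basic_code injI)

lemma basic_code_eq: "basic_code a = basic_code b \<longleftrightarrow> a = b"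
  using inj_basic_code by (auto dest: injD)

lemma cV_code: "cV (list_encode xs) \<longleftrightarrow> vl xs"
proof (cases "xs = []")
  case True
  then show ?thesis by (simp add: cV_def vl_def)
next
  case False
  then have "0 < list_encode xs" by (cases xs) auto
  then show ?thesis unfolding cV_def vl_def llen_code lhd_code[OF False] using False by simp
qed

lemma mem_code:
  assumes "set_decode S = basic_code ` \<alpha>"
  shows "basic_code \<psi> \<in> set_decode S \<longleftrightarrow> \<psi> \<in> \<alpha>"
  using assms by (auto simp: basic_code_eq)

lemma cAE_code:
  assumes "set_decode S = basic_code ` \<alpha>"
  shows "cAE S (list_encode xs) \<longleftrightarrow> eqs xs \<subseteq> \<alpha>"
proof -
  have "cAE S (list_encode xs) \<longleftrightarrow> (\<forall>i<length xs. basic_code (Pos (Eq (xs!i) (xs!i))) \<in> set_decode S)"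
    by (simp add: cAE_def llen_code lnth_code)
  also have "\<dots> \<longleftrightarrow> (\<forall>i<length xs. Pos (Eq (xs!i) (xs!i)) \<in> \<alpha>)"
    using mem_code[OF assms] by blast
  also have "\<dots> \<longleftrightarrow> eqs xs \<subseteq> \<alpha>"
    unfolding eqs_def image_subset_iff by (metis in_set_conv_nth)
  finally show ?thesis .
qed

lemma cFD_code:
  assumes "vl xs" "vl ys" "xs \<noteq> ys"
  shows "cFD (list_encode xs) (list_encode ys) = fd xs ys"
proof -
  note F = fd_props[OF assms]
  let ?P = "\<lambda>i. lnth i (list_encode xs) \<noteq> lnth i (list_encode ys)"
  have Pfd: "?P (fd xs ys)" using F by (simp add: lnth_code)
  from bmu_prop[of "fd xs ys" "length xs" ?P] F Pfd
  have B: "bmu (length xs) ?P < length xs" "?P (bmu (length xs) ?P)"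
     "\<forall>j<bmu (length xs) ?P. \<not> ?P j" by auto
  let ?b = "bmu (length xs) ?P"
  have "\<not> ?b < fd xs ys"
  proof
    assume "?b < fd xs ys"
    then have "xs ! ?b = ys ! ?b" "?b < length ys" using F by auto
    then show False using B(1,2) by (simp add: lnth_code)
  qed
  moreover have "\<not> fd xs ys < ?b" using B(3) Pfd by blast
  ultimately show ?thesis unfolding cFD_def llen_code by simp
qed

lemma pair_code_split:
  assumes "finite \<alpha>"
  shows "fst (prod_decode (pair_code (\<alpha>, \<phi>))) = set_encode (basic_code ` \<alpha>)"
    "snd (prod_decode (pair_code (\<alpha>, \<phi>))) = basic_code \<phi>"
    "set_decode (set_encode (basic_code ` \<alpha>)) = basic_code ` \<alpha>"
  using assms by (auto simp: pair_code_def)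

lemma code_arith:
  "basic_code (Pos a) mod 2 = 0" "basic_code (Neg a) mod 2 = 1"
  "basic_code (Pos a) div 2 = atom_code a" "basic_code (Neg a) div 2 = atom_code a"
  "atom_code (Lt u v) mod 2 = 0" "atom_code (Eq u v) mod 2 = 1"
  "atom_code (Lt u v) div 2 = prod_encode (u, v)" "atom_code (Eq u v) div 2 = prod_encode (u, v)"
  by simp_all

lemma Pred_gok:
  assumes fin: "finite \<alpha>"
  shows "Pred (pair_code (\<alpha>, \<phi>)) \<longleftrightarrow> gok \<alpha> \<phi>"
proof -
  let ?S = "set_encode (basic_code ` \<alpha>)"
  have SD: "set_decode ?S = basic_code ` \<alpha>" using pair_code_split(3)[OF fin] .
  note ps = pair_code_split(1,2)[OF fin, of \<phi>]
  obtain at where at: "\<phi> = Pos at \<or> \<phi> = Neg at" by (cases \<phi>) auto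
  obtain c d where cd: "at = Lt c d \<or> at = Eq c d" by (cases at) auto
  obtain xs ys where xy: "c = list_encode xs" "d = list_encode ys"
    by (metis list_decode_inverse)
  have lt: "lnth (cFD (list_encode xs) (list_encode ys)) (list_encode xs) = xs ! fd xs ys"
     "lnth (cFD (list_encode xs) (list_encode ys)) (list_encode ys) = ys ! fd xs ys"
    if "vl xs" "vl ys" "xs \<noteq> ys"
    using that fd_props[OF that] by (auto simp: cFD_code lnth_code)
  note simps = code_arith xy cV_code cAE_code[OF SD] list_encode_eq mem_code[OF SD]
  show ?thesis
    using at cd
  proof (elim disjE)
    assume "\<phi> = Pos at" "at = Lt c d"
    then show ?thesis
      unfolding Pred_def Let_def ps gok_def
      by (auto simp: simps lt simp del: basic_code.simps atom_code.simps)
  next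
    assume "\<phi> = Pos at" "at = Eq c d"
    then show ?thesis
      unfolding Pred_def Let_def ps gok_def
      by (auto simp: simps simp del: basic_code.simps atom_code.simps)
  next
    assume "\<phi> = Neg at" "at = Lt c d"
    then show ?thesis
      unfolding Pred_def Let_def ps gok_def
      by (cases "xs = ys") (auto simp: simps lt simp del: basic_code.simps atom_code.simps)
  next
    assume "\<phi> = Neg at" "at = Eq c d"
    then show ?thesis
      unfolding Pred_def Let_def ps gok_def
      by (auto simp: simps simp del: basic_code.simps atom_code.simps)
  qed
qed

lemma Gam_codes: "pair_code ` Gam = {x. Pred x}"
proof (intro set_eqI iffI)
  fix x assume "x \<in> pair_code ` Gam"
  then obtain \<alpha> \<phi> where "finite \<alpha>" "gok \<alpha> \<phi>" "x = pair_code (\<alpha>, \<phi>)"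
    unfolding Gam_def by auto
  then show "x \<in> {x. Pred x}" using Pred_gok by auto
next
  fix x assume x: "x \<in> {x. Pred x}"
  obtain s b where sb: "prod_decode x = (s, b)" by (cases "prod_decode x")
  let ?\<alpha> = "bdec ` set_decode s"
  have fin: "finite ?\<alpha>" by simp
  have im: "basic_code ` ?\<alpha> = set_decode s"
    by (simp add: image_image basic_code_bdec)
  have "pair_code (?\<alpha>, bdec b) = x"
    unfolding pair_code_def using sb
    by (simp add: im basic_code_bdec) (metis prod_decode_inverse)
  moreover then have "gok ?\<alpha> (bdec b)" using x Pred_gok[OF fin] by auto
  ultimately show "x \<in> pair_code ` Gam" unfolding Gam_def using fin by force
qed

lemma ce_Gam: "ce (pair_code ` Gam)"
proof -
  have "prs 2 (\<lambda>xs. 1 - of_bool (Pred (hd xs)))"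
    by (intro prs_minus prs_const prs_gen1[OF prs_Pred] prs_v0) simp
  then obtain g where g: "prim_rec 2 g" "\<forall>xs. length xs = 2 \<longrightarrow> g xs = 1 - of_bool (Pred (hd xs))"
    unfolding prs_def by auto
  have "pair_code ` Gam = {x. \<exists>y. g [x, y] = 0}"
    unfolding Gam_codes using g(2) by auto
  then show ?thesis unfolding ce_def using g(1) by blast
qed

lemma enum_op_Gam: "enum_op Gam"
  unfolding enum_op_def using ce_Gam by (auto simp: Gam_def)

lemma diag_mem[simp]:
  "Pos (Eq a b) \<in> diag S \<longleftrightarrow> a = b \<and> a \<in> fst S"
  "Neg (Eq a b) \<in> diag S \<longleftrightarrow> a \<in> fst S \<and> b \<in> fst S \<and> a \<noteq> b"
  "Pos (Lt a b) \<in> diag S \<longleftrightarrow> (a, b) \<in> snd S"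
  "Neg (Lt a b) \<in> diag S \<longleftrightarrow> a \<in> fst S \<and> b \<in> fst S \<and> (a, b) \<notin> snd S"
  by (auto simp: diag_def)

lemma diag_inj: "diag S = diag T \<Longrightarrow> S = T"
proof -
  assume e: "diag S = diag T"
  have "fst S = fst T"
  proof (intro set_eqI)
    fix a show "a \<in> fst S \<longleftrightarrow> a \<in> fst T"
      using diag_mem(1)[of a a S] diag_mem(1)[of a a T] e by simp
  qed
  moreover have "snd S = snd T"
  proof (intro set_eqI)
    fix p show "p \<in> snd S \<longleftrightarrow> p \<in> snd T"
      using diag_mem(3)[of "fst p" "snd p" S] diag_mem(3)[of "fst p" "snd p" T] e by simp
  qed
  ultimately show ?thesis by (simp add: prod_eq_iff)
qed

lemma eqs_sub[simp]: "eqs xs \<subseteq> diag S \<longleftrightarrow> set xs \<subseteq> fst S"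
  by (auto simp: eqs_def)

definition OutD :: "nat set \<Rightarrow> nat set" where
  "OutD D = list_encode ` {xs. vl xs \<and> set xs \<subseteq> D}"

definition OutR :: "nat set \<Rightarrow> (nat \<times> nat) set \<Rightarrow> (nat \<times> nat) set" where
  "OutR D R = {(list_encode xs, list_encode ys) | xs ys. vl xs \<and> set xs \<subseteq> D \<and> vl ys \<and> set ys \<subseteq> D
      \<and> xs \<noteq> ys \<and> (xs ! fd xs ys, ys ! fd xs ys) \<in> R}"

definition Out :: "struc \<Rightarrow> struc" where
  "Out S = (OutD (fst S), OutR (fst S) (snd S))"

lemma OutD_mem: "list_encode xs \<in> OutD D \<longleftrightarrow> vl xs \<and> set xs \<subseteq> D"
  by (auto simp: OutD_def list_encode_eq)

lemma OutR_mem: "(list_encode xs, list_encode ys) \<in> OutR D R \<longleftrightarrow>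
   vl xs \<and> set xs \<subseteq> D \<and> vl ys \<and> set ys \<subseteq> D \<and> xs \<noteq> ys \<and> (xs ! fd xs ys, ys ! fd xs ys) \<in> R"
  by (auto simp: OutR_def list_encode_eq)

lemma is_struc_Out: "is_struc (Out S)"
  by (auto simp: is_struc_def Out_def OutR_def OutD_def)

lemma gok_mono: "gok \<alpha> \<phi> \<Longrightarrow> \<alpha> \<subseteq> \<beta> \<Longrightarrow> gok \<beta> \<phi>"
  unfolding gok_def by blast

lemma gok_fin:
  assumes "gok X \<phi>"
  shows "\<exists>\<alpha>. finite \<alpha> \<and> \<alpha> \<subseteq> X \<and> gok \<alpha> \<phi>"
proof -
  let ?W = "\<lambda>xs ys. X \<inter> (eqs xs \<union> eqs ys \<union> {Pos (Lt (xs ! fd xs ys) (ys ! fd xs ys)),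
      Neg (Lt (xs ! fd xs ys) (ys ! fd xs ys))})"
  have fin: "finite (?W xs ys)" for xs ys by (simp add: eqs_def)
  from assms[unfolded gok_def] show ?thesis
  proof (elim disjE exE conjE)
    fix xs assume h: "vl xs" "\<phi> = Pos (Eq (list_encode xs) (list_encode xs))" "eqs xs \<subseteq> X"
    have "gok (eqs xs) \<phi>" unfolding gok_def using h(1,2) by blast
    then show ?thesis using h(3) by (intro exI[of _ "eqs xs"]) (auto simp: eqs_def)
  next
    fix xs ys assume h: "vl xs" "vl ys" "xs \<noteq> ys" "\<phi> = Neg (Eq (list_encode xs) (list_encode ys))"
       "eqs xs \<union> eqs ys \<subseteq> X"
    have sub: "eqs xs \<union> eqs ys \<subseteq> ?W xs ys" using h by blast
    have "gok (?W xs ys) \<phi>" unfolding gok_def using h(1-4) sub by blast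
    then show ?thesis using fin by blast
  next
    fix xs ys assume h: "vl xs" "vl ys" "xs \<noteq> ys" "\<phi> = Pos (Lt (list_encode xs) (list_encode ys))"
       "eqs xs \<union> eqs ys \<subseteq> X" "Pos (Lt (xs ! fd xs ys) (ys ! fd xs ys)) \<in> X"
    have sub: "eqs xs \<union> eqs ys \<subseteq> ?W xs ys" using h by blast
    have m: "Pos (Lt (xs ! fd xs ys) (ys ! fd xs ys)) \<in> ?W xs ys" using h by blast
    have "gok (?W xs ys) \<phi>" unfolding gok_def using h(1-4) sub m by blast
    then show ?thesis using fin by blast
  next
    fix xs ys assume h: "vl xs" "vl ys" "\<phi> = Neg (Lt (list_encode xs) (list_encode ys))"
       "eqs xs \<union> eqs ys \<subseteq> X" "xs = ys"
    have sub: "eqs xs \<union> eqs ys \<subseteq> ?W xs ys" using h by blast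
    have m: "xs = ys \<or> Neg (Lt (xs ! fd xs ys) (ys ! fd xs ys)) \<in> ?W xs ys" using h by blast
    have "gok (?W xs ys) \<phi>" unfolding gok_def using h(1-3) sub m by blast
    then show ?thesis using fin by blast
  next
    fix xs ys assume h: "vl xs" "vl ys" "\<phi> = Neg (Lt (list_encode xs) (list_encode ys))"
       "eqs xs \<union> eqs ys \<subseteq> X" "Neg (Lt (xs ! fd xs ys) (ys ! fd xs ys)) \<in> X"
    have sub: "eqs xs \<union> eqs ys \<subseteq> ?W xs ys" using h by blast
    have m: "xs = ys \<or> Neg (Lt (xs ! fd xs ys) (ys ! fd xs ys)) \<in> ?W xs ys" using h by blast
    have "gok (?W xs ys) \<phi>" unfolding gok_def using h(1-3) sub m by blast
    then show ?thesis using fin by blast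
  qed
qed

lemma enum_apply_Gam_gok: "enum_apply Gam X = {\<phi>. gok X \<phi>}"
proof (intro set_eqI iffI)
  fix \<phi> assume "\<phi> \<in> enum_apply Gam X"
  then obtain \<alpha> where "gok \<alpha> \<phi>" "\<alpha> \<subseteq> X" unfolding enum_apply_def Gam_def by auto
  then show "\<phi> \<in> {\<phi>. gok X \<phi>}" using gok_mono by blast
next
  fix \<phi> assume "\<phi> \<in> {\<phi>. gok X \<phi>}"
  then obtain \<alpha> where "finite \<alpha>" "\<alpha> \<subseteq> X" "gok \<alpha> \<phi>" using gok_fin by blast
  then show "\<phi> \<in> enum_apply Gam X" unfolding enum_apply_def Gam_def by auto
qed

lemma gok_diag: "gok (diag S) \<phi> \<longleftrightarrow> \<phi> \<in> diag (Out S)"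
proof -
  obtain at where at: "\<phi> = Pos at \<or> \<phi> = Neg at" by (cases \<phi>) auto
  obtain c d where cd: "at = Lt c d \<or> at = Eq c d" by (cases at) auto
  obtain xs ys where xy: "c = list_encode xs" "d = list_encode ys"
    by (metis list_decode_inverse)
  have inD: "xs ! fd xs ys \<in> fst S" "ys ! fd xs ys \<in> fst S"
    if "vl xs" "vl ys" "xs \<noteq> ys" "set xs \<subseteq> fst S" "set ys \<subseteq> fst S"
    using fd_props[OF that(1-3)] that(4,5) by (auto dest: nth_mem)
  show ?thesis
    using at cd
  proof (elim disjE)
    assume "\<phi> = Pos at" "at = Lt c d"
    then show ?thesis unfolding gok_def
      by (auto simp: xy Out_def OutR_mem list_encode_eq)
  next
    assume "\<phi> = Pos at" "at = Eq c d"
    then show ?thesis unfolding gok_def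
      by (auto simp: xy Out_def OutD_mem list_encode_eq)
  next
    assume "\<phi> = Neg at" "at = Lt c d"
    then show ?thesis unfolding gok_def
      using inD by (cases "xs = ys") (auto simp: xy Out_def OutR_mem OutD_mem list_encode_eq)
  next
    assume "\<phi> = Neg at" "at = Eq c d"
    then show ?thesis unfolding gok_def
      by (auto simp: xy Out_def OutD_mem list_encode_eq)
  qed
qed

lemma enum_apply_Gam: "enum_apply Gam (diag S) = diag (Out S)"
  unfolding enum_apply_Gam_gok using gok_diag by blast

section \<open>Well-orders and Schroeder-Bernstein\<close>

definition swo :: "'a set \<Rightarrow> ('a \<Rightarrow> 'a \<Rightarrow> bool) \<Rightarrow> bool" where
  "swo A lt \<longleftrightarrow> (\<forall>x\<in>A. \<not> lt x x) \<and> (\<forall>x\<in>A. \<forall>y\<in>A. \<forall>z\<in>A. lt x y \<longrightarrow> lt y z \<longrightarrow> lt x z)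
     \<and> (\<forall>x\<in>A. \<forall>y\<in>A. x \<noteq> y \<longrightarrow> lt x y \<or> lt y x) \<and> wf {(x, y). x \<in> A \<and> y \<in> A \<and> lt x y}"

definition rel_of :: "'a set \<Rightarrow> ('a \<Rightarrow> 'a \<Rightarrow> bool) \<Rightarrow> 'a rel" where
  "rel_of A lt = {(x, y). x \<in> A \<and> y \<in> A \<and> (x = y \<or> lt x y)}"

lemma Field_rel_of: "Field (rel_of A lt) = A"
proof
  show "Field (rel_of A lt) \<subseteq> A"
  proof
    fix x assume "x \<in> Field (rel_of A lt)"
    then obtain y where "(x, y) \<in> rel_of A lt \<or> (y, x) \<in> rel_of A lt"
      unfolding Field_def by blast
    then show "x \<in> A" unfolding rel_of_def by blast
  qed
  show "A \<subseteq> Field (rel_of A lt)"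
  proof
    fix x assume "x \<in> A"
    then have "(x, x) \<in> rel_of A lt" unfolding rel_of_def by blast
    then show "x \<in> Field (rel_of A lt)" by (rule FieldI1)
  qed
qed

lemma Well_order_rel_of:
  assumes "swo A lt" shows "Well_order (rel_of A lt)"
proof -
  have irr: "\<forall>x\<in>A. \<not> lt x x" and tr: "\<forall>x\<in>A. \<forall>y\<in>A. \<forall>z\<in>A. lt x y \<longrightarrow> lt y z \<longrightarrow> lt x z"
    and tot: "\<forall>x\<in>A. \<forall>y\<in>A. x \<noteq> y \<longrightarrow> lt x y \<or> lt y x"
    and w: "wf {(x, y). x \<in> A \<and> y \<in> A \<and> lt x y}" using assms unfolding swo_def by blast+
  have "rel_of A lt - Id = {(x, y). x \<in> A \<and> y \<in> A \<and> lt x y}"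
    using irr unfolding rel_of_def by auto
  then have "wf (rel_of A lt - Id)" using w by simp
  moreover have "linear_order_on A (rel_of A lt)"
    unfolding linear_order_on_def partial_order_on_def preorder_on_def refl_on_def trans_def
      antisym_def total_on_def rel_of_def
    using irr tr tot by blast
  ultimately show ?thesis unfolding well_order_on_def Field_rel_of by simp
qed

lemma mono_self:
  assumes "swo A lt" "\<forall>x\<in>A. H x \<in> A" "\<forall>x\<in>A. \<forall>y\<in>A. lt x y \<longrightarrow> lt (H x) (H y)"
  shows "x \<in> A \<Longrightarrow> \<not> lt (H x) x"
proof -
  let ?R = "{(x, y). x \<in> A \<and> y \<in> A \<and> lt x y}"
  have w: "wf ?R" using assms(1) unfolding swo_def by blast
  have "x \<in> A \<longrightarrow> \<not> lt (H x) x" for x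
  proof (induct x rule: wf_induct[OF w])
    case (1 x)
    show ?case
    proof (intro impI notI)
      assume xA: "x \<in> A" and l: "lt (H x) x"
      have hA: "H x \<in> A" using assms(2) xA by blast
      have "(H x, x) \<in> ?R" using hA xA l by blast
      then have "H x \<in> A \<longrightarrow> \<not> lt (H (H x)) (H x)" using 1 by blast
      then have "\<not> lt (H (H x)) (H x)" using hA by blast
      moreover have "lt (H (H x)) (H x)" using assms(3) hA xA l by blast
      ultimately show False by blast
    qed
  qed
  then show "x \<in> A \<Longrightarrow> \<not> lt (H x) x" by blast
qed

lemma embed_full:
  assumes A: "swo A lt" and B: "swo B lt'"
    and e: "embed (rel_of A lt) (rel_of B lt') f"
    and G: "\<forall>x\<in>B. G x \<in> A" "\<forall>x\<in>B. \<forall>y\<in>B. lt' x y \<longrightarrow> lt (G x) (G y)"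
  shows "bij_betw f A B \<and> (\<forall>x\<in>A. \<forall>y\<in>A. lt x y \<longleftrightarrow> lt' (f x) (f y))"
proof -
  have irrA: "\<forall>x\<in>A. \<not> lt x x" and totA: "\<forall>x\<in>A. \<forall>y\<in>A. x \<noteq> y \<longrightarrow> lt x y \<or> lt y x"
    using A unfolding swo_def by blast+
  have irrB: "\<forall>x\<in>B. \<not> lt' x x" and trB: "\<forall>x\<in>B. \<forall>y\<in>B. \<forall>z\<in>B. lt' x y \<longrightarrow> lt' y z \<longrightarrow> lt' x z"
    and totB: "\<forall>x\<in>B. \<forall>y\<in>B. x \<noteq> y \<longrightarrow> lt' x y \<or> lt' y x"
    using B unfolding swo_def by blast+
  have ec: "compat (rel_of A lt) (rel_of B lt') f" "inj_on f A"
    "wo_rel.ofilter (rel_of B lt') (f ` A)"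
    using e embed_iff_compat_inj_on_ofilter[OF Well_order_rel_of[OF A] Well_order_rel_of[OF B]]
    unfolding Field_rel_of by auto
  have cm: "(f x, f y) \<in> rel_of B lt'" if "(x, y) \<in> rel_of A lt" for x y
    using ec(1) that unfolding compat_def by blast
  have fB: "f x \<in> B" if "x \<in> A" for x
  proof -
    have "(x, x) \<in> rel_of A lt" using that unfolding rel_of_def by blast
    then show ?thesis using cm unfolding rel_of_def by blast
  qed
  have fmono: "lt' (f x) (f y)" if "x \<in> A" "y \<in> A" "lt x y" for x y
  proof -
    have "(x, y) \<in> rel_of A lt" using that unfolding rel_of_def by blast
    then have "(f x, f y) \<in> rel_of B lt'" using cm by blast
    moreover have "f x \<noteq> f y" using ec(2) that irrA by (metis inj_on_contraD)
    ultimately show ?thesis unfolding rel_of_def by auto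
  qed
  have surj: "f ` A = B"
  proof (rule ccontr)
    assume "f ` A \<noteq> B"
    then obtain b where b: "b \<in> B" "b \<notin> f ` A" using fB by blast
    let ?H = "\<lambda>x. f (G x)"
    have H1: "\<forall>x\<in>B. ?H x \<in> B" using G(1) fB by blast
    have H2: "\<forall>x\<in>B. \<forall>y\<in>B. lt' x y \<longrightarrow> lt' (?H x) (?H y)" using G fmono by blast
    have Hb: "?H b \<in> f ` A" using G(1) b(1) by blast
    have "under (rel_of B lt') (?H b) \<subseteq> f ` A"
    proof -
      have "wo_rel (rel_of B lt')" using Well_order_rel_of[OF B] by (simp add: wo_rel_def)
      show ?thesis using ec(3) Hb unfolding Order_Relation.ofilter_def by blast
    qed
    then have "\<not> lt' b (?H b)" using b H1 unfolding under_def rel_of_def by blast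
    moreover have "b \<noteq> ?H b" using b Hb by metis
    ultimately have "lt' (?H b) b" using totB b(1) H1 by blast
    then show False using mono_self[OF B H1 H2 b(1)] by blast
  qed
  have "bij_betw f A B" using ec(2) surj unfolding bij_betw_def by blast
  moreover have "lt x y \<longleftrightarrow> lt' (f x) (f y)" if "x \<in> A" "y \<in> A" for x y
  proof
    assume "lt' (f x) (f y)"
    moreover have "x \<noteq> y" using calculation irrB fB that by metis
    ultimately show "lt x y" using totA fmono trB irrB fB that by metis
  qed (use fmono that in blast)
  ultimately show ?thesis by blast
qed

lemma wo_SB:
  assumes A: "swo A lt" and B: "swo B lt'"
    and F: "\<forall>x\<in>A. F x \<in> B" "\<forall>x\<in>A. \<forall>y\<in>A. lt x y \<longrightarrow> lt' (F x) (F y)"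
    and G: "\<forall>x\<in>B. G x \<in> A" "\<forall>x\<in>B. \<forall>y\<in>B. lt' x y \<longrightarrow> lt (G x) (G y)"
  shows "\<exists>h. bij_betw h A B \<and> (\<forall>x\<in>A. \<forall>y\<in>A. lt x y \<longleftrightarrow> lt' (h x) (h y))"
proof -
  from wellorders_totally_ordered[OF Well_order_rel_of[OF A] Well_order_rel_of[OF B]]
  show ?thesis
  proof (elim disjE exE)
    fix f assume "embed (rel_of A lt) (rel_of B lt') f"
    then show ?thesis using embed_full[OF A B _ G] by blast
  next
    fix f assume "embed (rel_of B lt') (rel_of A lt) f"
    then have fb: "bij_betw f B A" and fo: "\<forall>x\<in>B. \<forall>y\<in>B. lt' x y \<longleftrightarrow> lt (f x) (f y)"
      using embed_full[OF B A _ F] by blast+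
    let ?h = "inv_into B f"
    have hb: "bij_betw ?h A B" using fb by (rule bij_betw_inv_into)
    have "lt x y \<longleftrightarrow> lt' (?h x) (?h y)" if "x \<in> A" "y \<in> A" for x y
    proof -
      have "?h x \<in> B" "?h y \<in> B" using hb that bij_betwE by blast+
      moreover have "f (?h x) = x" "f (?h y) = y" using fb that bij_betw_inv_into_right by metis+
      ultimately show ?thesis using fo by metis
    qed
    then show ?thesis using hb by blast
  qed
qed

section \<open>omega^omega\<close>

lemma oo_irr: "\<not> oo_less f f"
  unfolding oo_less_def by auto

lemma oo_trans: "oo_less f g \<Longrightarrow> oo_less g h \<Longrightarrow> oo_less f h"
  unfolding oo_less_def
proof (elim exE conjE)
  fix n m assume a: "f n < g n" "\<forall>k>n. f k = g k" "g m < h m" "\<forall>k>m. g k = h k"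
  show "\<exists>n. f n < h n \<and> (\<forall>k>n. f k = h k)"
  proof (cases n m rule: linorder_cases)
    case less then show ?thesis using a by (intro exI[of _ m]) auto
  next
    case equal then show ?thesis using a by (intro exI[of _ m]) auto
  next
    case greater then show ?thesis using a by (intro exI[of _ n]) auto
  qed
qed

lemma oo_asym: "oo_less f g \<Longrightarrow> \<not> oo_less g f"
  using oo_trans oo_irr by blast

lemma oo_fin: "f \<in> omega_omega \<Longrightarrow> finite {k. f k \<noteq> 0}"
  unfolding omega_omega_def by simp

lemma oo_total:
  assumes "f \<in> omega_omega" "g \<in> omega_omega" "f \<noteq> g"
  shows "oo_less f g \<or> oo_less g f"
proof -
  let ?S = "{k. f k \<noteq> g k}"
  have "?S \<subseteq> {k. f k \<noteq> 0} \<union> {k. g k \<noteq> 0}" by auto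
  then have fin: "finite ?S" using oo_fin[OF assms(1)] oo_fin[OF assms(2)] finite_subset by blast
  have ne: "?S \<noteq> {}" using assms(3) by auto
  let ?n = "Max ?S"
  have n1: "f ?n \<noteq> g ?n" using Max_in[OF fin ne] by simp
  have n2: "\<forall>m>?n. f m = g m" using Max_ge[OF fin] by (meson linorder_not_le mem_Collect_eq)
  show ?thesis
  proof (cases "f ?n < g ?n")
    case True then show ?thesis unfolding oo_less_def using n2 by blast
  next
    case False then have "g ?n < f ?n" using n1 by simp
    then show ?thesis unfolding oo_less_def using n2 by metis
  qed
qed

lemma oo_wf: "wf {(x, y). x \<in> omega_omega \<and> y \<in> omega_omega \<and> oo_less x y}"
proof -
  have cnt: "count (Abs_multiset f) = f" if "f \<in> omega_omega" for f
  proof -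
    have "{x. f x > 0} = {x. f x \<noteq> 0}" by auto
    then show ?thesis using that by (intro count_Abs_multiset) (simp add: omega_omega_def)
  qed
  have "{(x, y). x \<in> omega_omega \<and> y \<in> omega_omega \<and> oo_less x y}
      \<subseteq> inv_image {(M, N). M < (N :: nat multiset)} Abs_multiset"
  proof (clarsimp)
    fix f g assume f: "f \<in> omega_omega" and g: "g \<in> omega_omega" and l: "oo_less f g"
    then obtain n where n: "f n < g n" "\<forall>m>n. f m = g m" unfolding oo_less_def by blast
    show "Abs_multiset f < Abs_multiset g"
      unfolding less_multiset\<^sub>H\<^sub>O cnt[OF f] cnt[OF g]
    proof (intro conjI allI impI)
      show "Abs_multiset f \<noteq> Abs_multiset g"
      proof
        assume "Abs_multiset f = Abs_multiset g"
        then have "f = g" using cnt[OF f] cnt[OF g] by metis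
        then show False using n(1) by simp
      qed
      fix y assume "g y < f y"
      then have "y < n" using n by (metis less_imp_not_less linorder_neqE_nat order.strict_implies_not_eq)
      then show "\<exists>x>y. f x < g x" using n(1) by blast
    qed
  qed
  moreover have "wf (inv_image {(M, N). M < (N :: nat multiset)} Abs_multiset)"
    by (intro wf_inv_image wellorder_class.wf)
  ultimately show ?thesis by (rule wf_subset[rotated])
qed

lemma swo_oo: "swo omega_omega oo_less"
  unfolding swo_def using oo_irr oo_trans oo_total oo_wf by blast

section \<open>The sums Sigma_n omega^(g n)\<close>

definition Wset :: "(nat \<Rightarrow> nat) \<Rightarrow> nat list set" where
  "Wset g = {ns. ns \<noteq> [] \<and> length ns = Suc (g (hd ns))}"

definition Wlt :: "nat list \<Rightarrow> nat list \<Rightarrow> bool" where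
  "Wlt ns ms \<longleftrightarrow> ns \<noteq> ms \<and> ns ! fd ns ms < ms ! fd ns ms"

lemma fd_props_ex:
  assumes ex: "\<exists>i. i < length xs \<and> i < length ys \<and> xs ! i \<noteq> ys ! i"
  shows "fd xs ys < length xs \<and> fd xs ys < length ys \<and> xs ! fd xs ys \<noteq> ys ! fd xs ys
     \<and> (\<forall>j<fd xs ys. xs ! j = ys ! j)"
proof -
  let ?P = "\<lambda>i. i < length xs \<and> i < length ys \<and> xs ! i \<noteq> ys ! i"
  have a: "?P (fd xs ys)" unfolding fd_def using ex by (rule LeastI_ex)
  have b: "xs ! j = ys ! j" if "j < fd xs ys" for j
  proof -
    have "\<not> ?P j" using that unfolding fd_def by (rule not_less_Least)
    then show ?thesis using a that by auto
  qed
  show ?thesis using a b by blast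
qed

lemma W_ex:
  assumes "ns \<in> Wset g" "ms \<in> Wset g" "ns \<noteq> ms"
  shows "\<exists>i. i < length ns \<and> i < length ms \<and> ns ! i \<noteq> ms ! i"
proof (cases "hd ns = hd ms")
  case True
  then have len: "length ns = length ms" using assms(1,2) by (simp add: Wset_def)
  show ?thesis
  proof (rule ccontr)
    assume "\<not> ?thesis"
    then have "\<forall>i<length ns. ns ! i = ms ! i" using len by auto
    then have "ns = ms" using len by (simp add: list_eq_iff_nth_eq)
    then show False using assms(3) by simp
  qed
next
  case False
  then show ?thesis using assms(1,2) by (intro exI[of _ 0]) (auto simp: Wset_def hd_conv_nth)
qed

lemma W_fd:
  assumes "ns \<in> Wset g" "ms \<in> Wset g" "ns \<noteq> ms"
  shows "fd ns ms < length ns \<and> fd ns ms < length ms \<and> ns ! fd ns ms \<noteq> ms ! fd ns ms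
     \<and> (\<forall>j<fd ns ms. ns ! j = ms ! j)"
  by (rule fd_props_ex[OF W_ex[OF assms]])

lemma Wlt_intro:
  assumes "i < length xs" "i < length ys" "\<forall>j<i. xs ! j = ys ! j" "xs ! i < ys ! i"
  shows "Wlt xs ys"
proof -
  have "fd xs ys = i" using assms by (intro fd_unique) auto
  then show ?thesis unfolding Wlt_def using assms(4) by auto
qed

lemma Wlt_total:
  assumes "ns \<in> Wset g" "ms \<in> Wset g" "ns \<noteq> ms"
  shows "Wlt ns ms \<or> Wlt ms ns"
  using W_fd[OF assms] assms(3) fd_sym[of ms ns] unfolding Wlt_def
  by (metis linorder_neqE_nat)

definition Gm :: "(nat \<Rightarrow> nat) \<Rightarrow> nat \<Rightarrow> nat" where
  "Gm g n = Max (g ` {..n})"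

lemma Gm_ge: "g n \<le> Gm g n"
  unfolding Gm_def by (intro Max_ge) auto

lemma Gm_mono: "n \<le> m \<Longrightarrow> Gm g n \<le> Gm g m"
  unfolding Gm_def by (intro Max_mono) auto

definition emb :: "(nat \<Rightarrow> nat) \<Rightarrow> nat list \<Rightarrow> nat \<Rightarrow> nat" where
  "emb g ns = (\<lambda>k. if k = Gm g (hd ns) then Suc (hd ns)
      else if k < Gm g (hd ns) \<and> Gm g (hd ns) - 1 - k < g (hd ns) then ns ! Suc (Gm g (hd ns) - 1 - k)
      else 0)"

lemma emb_zero: "Gm g (hd ns) < k \<Longrightarrow> emb g ns k = 0"
  unfolding emb_def by auto

lemma emb_oo: "emb g ns \<in> omega_omega"
proof -
  have "{k. emb g ns k \<noteq> 0} \<subseteq> {..Gm g (hd ns)}"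
  proof
    fix k assume "k \<in> {k. emb g ns k \<noteq> 0}"
    then have "\<not> Gm g (hd ns) < k" using emb_zero by auto
    then show "k \<in> {..Gm g (hd ns)}" by simp
  qed
  then show ?thesis unfolding omega_omega_def by (auto intro: finite_subset)
qed

lemma emb_mono:
  assumes ns: "ns \<in> Wset g" and ms: "ms \<in> Wset g" and l: "Wlt ns ms"
  shows "oo_less (emb g ns) (emb g ms)"
proof -
  have ne: "ns \<noteq> ms" using l unfolding Wlt_def by simp
  note F = W_fd[OF ns ms ne]
  let ?i = "fd ns ms"
  have lt: "ns ! ?i < ms ! ?i" using l unfolding Wlt_def by simp
  have h0: "hd ns = ns ! 0" "hd ms = ms ! 0" using ns ms by (auto simp: Wset_def hd_conv_nth)
  show ?thesis
  proof (cases "?i = 0")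
    case True
    then have nm: "hd ns < hd ms" using lt h0 by simp
    then have Kle: "Gm g (hd ns) \<le> Gm g (hd ms)" by (intro Gm_mono) simp
    show ?thesis
    proof (cases "Gm g (hd ns) < Gm g (hd ms)")
      case True
      show ?thesis unfolding oo_less_def
        by (rule exI[of _ "Gm g (hd ms)"]) (use True emb_zero in \<open>auto simp: emb_def\<close>)
    next
      case False
      then have K: "Gm g (hd ns) = Gm g (hd ms)" using Kle by simp
      show ?thesis unfolding oo_less_def
        by (rule exI[of _ "Gm g (hd ms)"]) (use K nm emb_zero in \<open>auto simp: emb_def\<close>)
    qed
  next
    case False
    then have "ns ! 0 = ms ! 0" using F by auto
    then have hd: "hd ns = hd ms" using h0 by simp
    define n where "n = hd ns"
    define K where "K = Gm g n"
    define j where "j = ?i - 1"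
    have ij: "?i = Suc j" using False unfolding j_def by simp
    have lens: "length ns = Suc (g n)" "length ms = Suc (g n)"
      using ns ms hd unfolding Wset_def n_def by auto
    have jg: "j < g n" using F ij lens by simp
    have gK: "g n \<le> K" unfolding K_def by (rule Gm_ge)
    define k0 where "k0 = K - 1 - j"
    have k0: "k0 < K" "K - 1 - k0 = j" using jg gK unfolding k0_def by auto
    have E: "emb g ns k = (if k = K then Suc n else if k < K \<and> K - 1 - k < g n then ns ! Suc (K - 1 - k) else 0)"
      "emb g ms k = (if k = K then Suc n else if k < K \<and> K - 1 - k < g n then ms ! Suc (K - 1 - k) else 0)"
      for k unfolding emb_def K_def n_def using hd by auto
    have at: "emb g ns k0 < emb g ms k0"
      using k0 jg lt ij by (simp add: E)
    have above: "emb g ns k = emb g ms k" if "k0 < k" for k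
    proof -
      have "ns ! Suc (K - 1 - k) = ms ! Suc (K - 1 - k)" if "k < K"
      proof -
        have "Suc (K - 1 - k) < ?i" using \<open>k0 < k\<close> k0 that ij by linarith
        then show ?thesis using F by blast
      qed
      then show ?thesis by (simp add: E)
    qed
    show ?thesis unfolding oo_less_def using at above by blast
  qed
qed

lemma inj_unb:
  assumes "inj (g :: nat \<Rightarrow> nat)" shows "\<exists>n. m < n \<and> N \<le> g n"
proof -
  have "finite (g -` {..<N})" using assms by (intro finite_vimageI) auto
  moreover have "g -` {..<N} = {n. g n < N}" by auto
  ultimately have "finite {n. g n < N}" by simp
  then obtain B where B: "\<forall>n\<in>{n. g n < N}. n \<le> B"
    using finite_nat_set_iff_bounded_le by blast
  show ?thesis
    by (rule exI[of _ "Suc (max m B)"]) (use B in \<open>auto simp: not_less[symmetric]\<close>)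
qed

primrec sel :: "(nat \<Rightarrow> nat) \<Rightarrow> nat \<Rightarrow> nat" where
  "sel g 0 = (LEAST n. Suc 0 \<le> g n)"
| "sel g (Suc K) = (LEAST n. sel g K < n \<and> Suc (Suc K) \<le> g n)"

lemma sel_props:
  assumes "inj g"
  shows "Suc K \<le> g (sel g K) \<and> sel g K < sel g (Suc K)"
proof -
  have a: "Suc K \<le> g (sel g K)" for K
  proof (cases K)
    case 0
    obtain n where "0 < n \<and> Suc 0 \<le> g n" using inj_unb[OF assms] by blast
    then show ?thesis using 0 by (auto intro: LeastI)
  next
    case (Suc K')
    obtain n where "sel g K' < n \<and> Suc (Suc K') \<le> g n" using inj_unb[OF assms] by blast
    then show ?thesis using Suc by (auto intro: LeastI2)
  qed
  have b: "sel g K < sel g (Suc K)"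
  proof -
    obtain n where "sel g K < n \<and> Suc (Suc K) \<le> g n" using inj_unb[OF assms] by blast
    then show ?thesis by (auto intro: LeastI2)
  qed
  show ?thesis using a b by blast
qed

lemma sel_mono: "inj g \<Longrightarrow> strict_mono (sel g)"
  using sel_props unfolding strict_mono_Suc_iff by blast

definition topk :: "(nat \<Rightarrow> nat) \<Rightarrow> nat" where
  "topk f = (if \<forall>k. f k = 0 then 0 else Max {k. f k \<noteq> 0})"

lemma top_ge: "f \<in> omega_omega \<Longrightarrow> f k \<noteq> 0 \<Longrightarrow> k \<le> topk f"
  unfolding topk_def using oo_fin by (auto intro: Max_ge)

lemma top_in: "f \<in> omega_omega \<Longrightarrow> f k \<noteq> 0 \<Longrightarrow> f (topk f) \<noteq> 0"
proof -
  assume f: "f \<in> omega_omega" "f k \<noteq> 0"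
  then have "Max {k. f k \<noteq> 0} \<in> {k. f k \<noteq> 0}" using oo_fin[OF f(1)] by (intro Max_in) auto
  then show ?thesis unfolding topk_def using f(2) by auto
qed

lemma top_zero: "f \<in> omega_omega \<Longrightarrow> topk f < k \<Longrightarrow> f k = 0"
  using top_ge by (meson not_le)

definition Gf :: "(nat \<Rightarrow> nat) \<Rightarrow> (nat \<Rightarrow> nat) \<Rightarrow> nat list" where
  "Gf g f = sel g (topk f) # map (\<lambda>i. f (g (sel g (topk f)) - 1 - i)) [0..<g (sel g (topk f))]"

lemma Gf_W: "Gf g f \<in> Wset g"
  unfolding Gf_def Wset_def by simp

lemma Gf_mono:
  assumes g: "inj g" and f: "f \<in> omega_omega" and h: "h \<in> omega_omega" and l: "oo_less f h"
  shows "Wlt (Gf g f) (Gf g h)"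
proof -
  obtain n where n: "f n < h n" "\<forall>m>n. f m = h m" using l unfolding oo_less_def by blast
  have nh: "n \<le> topk h" using n(1) top_ge[OF h] by simp
  have tle: "topk f \<le> topk h"
  proof (rule ccontr)
    assume "\<not> ?thesis"
    then have gt: "topk h < topk f" by simp
    have "\<not> (\<forall>k. f k = 0)"
    proof
      assume "\<forall>k. f k = 0"
      then have "topk f = 0" unfolding topk_def by simp
      then show False using gt by simp
    qed
    then obtain k where "f k \<noteq> 0" by blast
    then have "f (topk f) \<noteq> 0" using top_in[OF f] by blast
    moreover have "f (topk f) = h (topk f)" using n(2) nh gt by simp
    moreover have "h (topk f) = 0" using top_zero[OF h gt] .
    ultimately show False by simp
  qed
  show ?thesis
  proof (cases "topk f < topk h")
    case True
    have "sel g (topk f) < sel g (topk h)" using sel_mono[OF g] True by (rule strict_monoD)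
    then show ?thesis by (intro Wlt_intro[of 0]) (auto simp: Gf_def)
  next
    case False
    then have K: "topk f = topk h" using tle by simp
    define L where "L = g (sel g (topk h))"
    have KL: "topk h < L" using sel_props[OF g, of "topk h"] unfolding L_def by simp
    have Gf: "Gf g f = sel g (topk h) # map (\<lambda>i. f (L - 1 - i)) [0..<L]"
      "Gf g h = sel g (topk h) # map (\<lambda>i. h (L - 1 - i)) [0..<L]"
      unfolding Gf_def L_def K by simp_all
    define i where "i = Suc (L - 1 - n)"
    have iL: "L - 1 - n < L" using KL nh by linarith
    show ?thesis
    proof (rule Wlt_intro[of i])
      show "i < length (Gf g f)" "i < length (Gf g h)" using iL by (simp_all add: Gf i_def)
      show "Gf g f ! i < Gf g h ! i" using iL KL nh n(1) by (simp add: Gf i_def)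
      show "\<forall>j<i. Gf g f ! j = Gf g h ! j"
      proof (intro allI impI)
        fix j assume "j < i"
        then show "Gf g f ! j = Gf g h ! j"
        proof (cases j)
          case 0 then show ?thesis by (simp add: Gf)
        next
          case (Suc j')
          then have "j' < L - 1 - n" using \<open>j < i\<close> i_def by simp
          then have "n < L - 1 - j'" by linarith
          then show ?thesis using Suc n(2) \<open>j' < L - 1 - n\<close> iL by (simp add: Gf)
        qed
      qed
    qed
  qed
qed

lemma swo_W: "inj g \<Longrightarrow> swo (Wset g) Wlt"
proof -
  assume g: "inj g"
  have irr: "\<forall>x\<in>Wset g. \<not> Wlt x x" unfolding Wlt_def by simp
  have tot: "\<forall>x\<in>Wset g. \<forall>y\<in>Wset g. x \<noteq> y \<longrightarrow> Wlt x y \<or> Wlt y x" using Wlt_total by blast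
  have tr: "\<forall>x\<in>Wset g. \<forall>y\<in>Wset g. \<forall>z\<in>Wset g. Wlt x y \<longrightarrow> Wlt y z \<longrightarrow> Wlt x z"
  proof (intro ballI impI)
    fix x y z assume W: "x \<in> Wset g" "y \<in> Wset g" "z \<in> Wset g" and l: "Wlt x y" "Wlt y z"
    have e1: "oo_less (emb g x) (emb g z)" using emb_mono[OF W(1,2) l(1)] emb_mono[OF W(2,3) l(2)]
      by (rule oo_trans)
    have "x \<noteq> z" using e1 oo_irr by blast
    then have "Wlt x z \<or> Wlt z x" using Wlt_total W by blast
    moreover have "\<not> Wlt z x" using emb_mono[OF W(3,1)] e1 oo_asym by blast
    ultimately show "Wlt x z" by blast
  qed
  have "{(x, y). x \<in> Wset g \<and> y \<in> Wset g \<and> Wlt x y}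
     \<subseteq> inv_image {(x, y). x \<in> omega_omega \<and> y \<in> omega_omega \<and> oo_less x y} (emb g)"
    using emb_mono emb_oo by auto
  then have "wf {(x, y). x \<in> Wset g \<and> y \<in> Wset g \<and> Wlt x y}"
    using wf_subset[OF wf_inv_image[OF oo_wf]] by blast
  then show ?thesis unfolding swo_def using irr tot tr by blast
qed

lemma W_iso_oo:
  assumes g: "inj g"
  shows "\<exists>h. bij_betw h (Wset g) omega_omega \<and>
     (\<forall>x\<in>Wset g. \<forall>y\<in>Wset g. Wlt x y \<longleftrightarrow> oo_less (h x) (h y))"
  by (rule wo_SB[OF swo_W[OF g] swo_oo, of "emb g" "Gf g"]) (use emb_oo emb_mono Gf_W Gf_mono[OF g] in blast)+

lemma fd_map:
  assumes "inj_on f S" "set xs \<subseteq> S" "set ys \<subseteq> S"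
  shows "fd (map f xs) (map f ys) = fd xs ys"
proof -
  have "(i < length (map f xs) \<and> i < length (map f ys) \<and> map f xs ! i \<noteq> map f ys ! i)
     \<longleftrightarrow> (i < length xs \<and> i < length ys \<and> xs ! i \<noteq> ys ! i)" for i
  proof (cases "i < length xs \<and> i < length ys")
    case True
    then have "xs ! i \<in> S" "ys ! i \<in> S" using assms(2,3) nth_mem by blast+
    then show ?thesis using True assms(1) by (auto dest: inj_onD)
  qed auto
  then show ?thesis unfolding fd_def by simp
qed

lemma Out_iso:
  assumes iso: "iso_to A (UNIV :: nat set) (<)"
  shows "iso_to (Out A) omega_omega oo_less"
proof -
  let ?D = "fst A" and ?R = "snd A"
  obtain f :: "nat \<Rightarrow> nat" where fb: "bij_betw f ?D UNIV" and fo: "\<forall>x\<in>?D. \<forall>y\<in>?D. (x, y) \<in> ?R \<longleftrightarrow> f x < f y"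
    using iso unfolding iso_to_def by blast
  have fi: "inj_on f ?D" and fs: "f ` ?D = UNIV" using fb unfolding bij_betw_def by auto
  define g where "g = inv_into ?D f"
  have gD: "g n \<in> ?D" for n unfolding g_def using fs by (intro inv_into_into) auto
  have fg: "f (g n) = n" for n unfolding g_def using fs by (intro f_inv_into_f) auto
  have gf: "x \<in> ?D \<Longrightarrow> g (f x) = x" for x unfolding g_def using fi by (rule inv_into_f_f)
  have ginj: "inj g" by (metis fg injI)
  define Phi where "Phi c = map f (list_decode c)" for c
  define Psi where "Psi ns = list_encode (map g ns)" for ns
  have OD: "c \<in> OutD ?D \<longleftrightarrow> (\<exists>xs. c = list_encode xs \<and> vl xs \<and> set xs \<subseteq> ?D)" for c
    unfolding OutD_def by auto
  have mapgf: "set xs \<subseteq> ?D \<Longrightarrow> map g (map f xs) = xs" for xs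
    using gf by (induct xs) auto
  have mapfg: "map f (map g ns) = ns" for ns
    using fg by (induct ns) auto
  have bij: "bij_betw Phi (OutD ?D) (Wset g)"
  proof (rule bij_betw_byWitness[where f'=Psi])
    show "\<forall>c\<in>OutD ?D. Psi (Phi c) = c"
      using OD mapgf unfolding Phi_def Psi_def by auto
    show "\<forall>ns\<in>Wset g. Phi (Psi ns) = ns"
      using mapfg unfolding Phi_def Psi_def by simp
    show "Phi ` OutD ?D \<subseteq> Wset g"
    proof
      fix ns assume "ns \<in> Phi ` OutD ?D"
      then obtain c where c: "c \<in> OutD ?D" "ns = Phi c" by blast
      then obtain xs where xs0: "c = list_encode xs" "vl xs" "set xs \<subseteq> ?D" using OD[of c] by blast
      then have xs: "ns = map f xs" "vl xs" "set xs \<subseteq> ?D" using c(2) unfolding Phi_def by simp_all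
      have "hd xs \<in> ?D" using xs(2,3) unfolding vl_def by auto
      then show "ns \<in> Wset g" using xs gf unfolding Wset_def vl_def by (simp add: hd_map)
    qed
    show "Psi ` Wset g \<subseteq> OutD ?D"
    proof
      fix c assume "c \<in> Psi ` Wset g"
      then obtain ns where ns: "c = list_encode (map g ns)" "ns \<in> Wset g" unfolding Psi_def by auto
      have "vl (map g ns)" using ns(2) unfolding vl_def Wset_def by (simp add: hd_map)
      moreover have "set (map g ns) \<subseteq> ?D" using gD by auto
      ultimately show "c \<in> OutD ?D" using ns(1) OD by blast
    qed
  qed
  have ord: "(c, d) \<in> OutR ?D ?R \<longleftrightarrow> Wlt (Phi c) (Phi d)" if cD: "c \<in> OutD ?D" and dD: "d \<in> OutD ?D" for c d
  proof -
    obtain xs where xs: "c = list_encode xs" "vl xs" "set xs \<subseteq> ?D" using OD[of c] cD by blast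
    obtain ys where ys: "d = list_encode ys" "vl ys" "set ys \<subseteq> ?D" using OD[of d] dD by blast
    have P: "Phi c = map f xs" "Phi d = map f ys" unfolding Phi_def xs(1) ys(1) by simp_all
    have neq: "map f xs = map f ys \<longleftrightarrow> xs = ys" using xs(3) ys(3) mapgf by metis
    show ?thesis
    proof (cases "xs = ys")
      case True then show ?thesis unfolding P Wlt_def xs(1) ys(1) OutR_mem by simp
    next
      case False
      note F = fd_props[OF xs(2) ys(2) False]
      have inD: "xs ! fd xs ys \<in> ?D" "ys ! fd xs ys \<in> ?D" using F xs(3) ys(3) nth_mem by blast+
      have "(c, d) \<in> OutR ?D ?R \<longleftrightarrow> (xs ! fd xs ys, ys ! fd xs ys) \<in> ?R"
        unfolding xs(1) ys(1) OutR_mem using xs ys False by simp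
      also have "\<dots> \<longleftrightarrow> f (xs ! fd xs ys) < f (ys ! fd xs ys)" using fo inD by blast
      also have "\<dots> \<longleftrightarrow> Wlt (Phi c) (Phi d)"
        unfolding P Wlt_def fd_map[OF fi xs(3) ys(3)] using F False neq by simp
      finally show ?thesis .
    qed
  qed
  obtain h where hb: "bij_betw h (Wset g) omega_omega"
    and ho: "\<forall>x\<in>Wset g. \<forall>y\<in>Wset g. Wlt x y \<longleftrightarrow> oo_less (h x) (h y)"
    using W_iso_oo[OF ginj] by blast
  have "bij_betw (h \<circ> Phi) (OutD ?D) omega_omega" using bij hb by (rule bij_betw_trans)
  moreover have "\<forall>x\<in>OutD ?D. \<forall>y\<in>OutD ?D. (x, y) \<in> OutR ?D ?R \<longleftrightarrow> oo_less ((h \<circ> Phi) x) ((h \<circ> Phi) y)"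
    using ord ho bij bij_betwE by fastforce
  ultimately show ?thesis unfolding iso_to_def Out_def by auto
qed

lemma OutR_conv: "OutR D (R\<inverse>) = (OutR D R)\<inverse>"
proof (intro set_eqI)
  fix p :: "nat \<times> nat"
  obtain c d where p: "p = (c, d)" by (cases p)
  obtain xs ys where xy: "c = list_encode xs" "d = list_encode ys" by (metis list_decode_inverse)
  show "p \<in> OutR D (R\<inverse>) \<longleftrightarrow> p \<in> (OutR D R)\<inverse>"
    unfolding p xy converse_iff OutR_mem using fd_sym[of xs ys] by auto
qed

lemma Out_iso_rev:
  assumes iso: "iso_to A (UNIV :: nat set) (>)"
  shows "iso_to (Out A) omega_omega (\<lambda>f g. oo_less g f)"
proof -
  have "iso_to (fst A, (snd A)\<inverse>) (UNIV :: nat set) (<)"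
    using iso unfolding iso_to_def by auto
  then have "iso_to (Out (fst A, (snd A)\<inverse>)) omega_omega oo_less" by (rule Out_iso)
  then obtain h where hb: "bij_betw h (OutD (fst A)) omega_omega"
    and ho: "\<forall>x\<in>OutD (fst A). \<forall>y\<in>OutD (fst A). (x, y) \<in> OutR (fst A) ((snd A)\<inverse>) \<longleftrightarrow> oo_less (h x) (h y)"
    unfolding iso_to_def Out_def by auto
  have "\<forall>x\<in>OutD (fst A). \<forall>y\<in>OutD (fst A). (x, y) \<in> OutR (fst A) (snd A) \<longleftrightarrow> oo_less (h y) (h x)"
    using ho unfolding OutR_conv by auto
  then show ?thesis using hb unfolding iso_to_def Out_def by auto
qed

lemma iso_to_struc_iso:
  assumes "iso_to S C lt" "iso_to T C lt"
  shows "struc_iso S T"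
proof -
  obtain f where f: "bij_betw f (fst S) C" "\<forall>x\<in>fst S. \<forall>y\<in>fst S. (x, y) \<in> snd S \<longleftrightarrow> lt (f x) (f y)"
    using assms(1) unfolding iso_to_def by blast
  obtain g where g: "bij_betw g (fst T) C" "\<forall>x\<in>fst T. \<forall>y\<in>fst T. (x, y) \<in> snd T \<longleftrightarrow> lt (g x) (g y)"
    using assms(2) unfolding iso_to_def by blast
  let ?h = "inv_into (fst T) g \<circ> f"
  have hb: "bij_betw ?h (fst S) (fst T)" using f(1) bij_betw_inv_into[OF g(1)] by (rule bij_betw_trans)
  have "(x, y) \<in> snd S \<longleftrightarrow> (?h x, ?h y) \<in> snd T" if "x \<in> fst S" "y \<in> fst S" for x y
  proof -
    have "f x \<in> C" "f y \<in> C" using f(1) that bij_betwE by blast+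
    then have "g (?h x) = f x" "g (?h y) = f y" using g(1) bij_betw_inv_into_right by fastforce+
    moreover have "?h x \<in> fst T" "?h y \<in> fst T" using hb that bij_betwE by blast+
    ultimately show ?thesis using f(2) g(2) that by metis
  qed
  then show ?thesis unfolding struc_iso_def using hb by blast
qed

lemma struc_iso_iso_to:
  assumes "struc_iso S T" "iso_to T C lt"
  shows "iso_to S C lt"
proof -
  obtain h where h: "bij_betw h (fst S) (fst T)" "\<forall>x\<in>fst S. \<forall>y\<in>fst S. (x, y) \<in> snd S \<longleftrightarrow> (h x, h y) \<in> snd T"
    using assms(1) unfolding struc_iso_def by blast
  obtain g where g: "bij_betw g (fst T) C" "\<forall>x\<in>fst T. \<forall>y\<in>fst T. (x, y) \<in> snd T \<longleftrightarrow> lt (g x) (g y)"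
    using assms(2) unfolding iso_to_def by blast
  have "bij_betw (g \<circ> h) (fst S) C" using h(1) g(1) by (rule bij_betw_trans)
  moreover have "\<forall>x\<in>fst S. \<forall>y\<in>fst S. (x, y) \<in> snd S \<longleftrightarrow> lt ((g \<circ> h) x) ((g \<circ> h) y)"
  proof (intro ballI)
    fix x y assume xy: "x \<in> fst S" "y \<in> fst S"
    then have "h x \<in> fst T" "h y \<in> fst T" using h(1) bij_betwE by blast+
    then show "(x, y) \<in> snd S \<longleftrightarrow> lt ((g \<circ> h) x) ((g \<circ> h) y)" using h(2) g(2) xy by simp
  qed
  ultimately show ?thesis unfolding iso_to_def by blast
qed

lemma iso_pair:
  assumes "iso_to S C lt1" "iso_to S C' lt2"
  shows "\<exists>h. bij_betw h C C' \<and> (\<forall>x\<in>C. \<forall>y\<in>C. lt1 x y \<longleftrightarrow> lt2 (h x) (h y))"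
proof -
  obtain f where f: "bij_betw f (fst S) C" "\<forall>x\<in>fst S. \<forall>y\<in>fst S. (x, y) \<in> snd S \<longleftrightarrow> lt1 (f x) (f y)"
    using assms(1) unfolding iso_to_def by blast
  obtain g where g: "bij_betw g (fst S) C'" "\<forall>x\<in>fst S. \<forall>y\<in>fst S. (x, y) \<in> snd S \<longleftrightarrow> lt2 (g x) (g y)"
    using assms(2) unfolding iso_to_def by blast
  let ?h = "g \<circ> inv_into (fst S) f"
  have hb: "bij_betw ?h C C'" using bij_betw_inv_into[OF f(1)] g(1) by (rule bij_betw_trans)
  have "lt1 x y \<longleftrightarrow> lt2 (?h x) (?h y)" if "x \<in> C" "y \<in> C" for x y
  proof -
    have "inv_into (fst S) f x \<in> fst S" "inv_into (fst S) f y \<in> fst S"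
      using bij_betw_inv_into[OF f(1)] that bij_betwE by blast+
    moreover have "f (inv_into (fst S) f x) = x" "f (inv_into (fst S) f y) = y"
      using f(1) that bij_betw_inv_into_right by fastforce+
    ultimately show ?thesis using f(2) g(2) by (metis comp_apply)
  qed
  then show ?thesis using hb by blast
qed

lemma not_both_nat:
  "\<not> (iso_to S (UNIV :: nat set) (<) \<and> iso_to S (UNIV :: nat set) (>))"
proof
  assume "iso_to S (UNIV :: nat set) (<) \<and> iso_to S (UNIV :: nat set) (>)"
  then obtain h :: "nat \<Rightarrow> nat" where h: "\<forall>x y. x < y \<longleftrightarrow> h y < h x"
    using iso_pair[of S UNIV "(<)" UNIV "(>)"] by auto
  have "h k + k \<le> h 0" for k
  proof (induct k)
    case 0 then show ?case by simp
  next
    case (Suc k)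
    have "h (Suc k) < h k" using h by blast
    then show ?case using Suc by simp
  qed
  from this[of "Suc (h 0)"] show False by simp
qed

lemma not_both_oo:
  "\<not> (iso_to S omega_omega oo_less \<and> iso_to S omega_omega (\<lambda>f g. oo_less g f))"
proof
  assume "iso_to S omega_omega oo_less \<and> iso_to S omega_omega (\<lambda>f g. oo_less g f)"
  then obtain h where hb: "bij_betw h omega_omega omega_omega"
    and ho: "\<forall>x\<in>omega_omega. \<forall>y\<in>omega_omega. oo_less x y \<longleftrightarrow> oo_less (h y) (h x)"
    using iso_pair[of S omega_omega oo_less omega_omega "\<lambda>f g. oo_less g f"] by auto
  let ?z = "\<lambda>_::nat. 0::nat"
  have z: "?z \<in> omega_omega" unfolding omega_omega_def by simp
  have zmin: "oo_less ?z y" if "y \<in> omega_omega" "y \<noteq> ?z" for y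
    using oo_total[OF z that(1)] that(2) unfolding oo_less_def by auto
  let ?w = "h ?z"
  have w: "?w \<in> omega_omega" using hb z bij_betwE by blast
  let ?N = "Suc (topk ?w)"
  let ?w' = "?w(?N := 1)"
  have w'oo: "?w' \<in> omega_omega"
  proof -
    have "{k. ?w' k \<noteq> 0} \<subseteq> insert ?N {k. ?w k \<noteq> 0}" by auto
    moreover have "finite (insert ?N {k. ?w k \<noteq> 0})" using oo_fin[OF w] by simp
    ultimately have "finite {k. ?w' k \<noteq> 0}" by (rule finite_subset)
    then show ?thesis unfolding omega_omega_def by simp
  qed
  have wN: "?w ?N = 0" using top_zero[OF w] by simp
  have ww': "oo_less ?w ?w'" unfolding oo_less_def
    by (rule exI[of _ ?N]) (use wN in auto)
  obtain y where y: "y \<in> omega_omega" "h y = ?w'"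
    using hb w'oo unfolding bij_betw_def by (metis imageE)
  have "y \<noteq> ?z" using y(2) wN by (metis fun_upd_same zero_neq_one)
  then have "oo_less ?z y" using zmin y(1) by blast
  then have "oo_less ?w' ?w" using ho z y by auto
  then show False using ww' oo_asym by blast
qed

theorem proposition6p5:
  shows "cls2 (UNIV :: nat set) (<) (UNIV :: nat set) (>)
           \<le>\<^sub>c cls2 omega_omega oo_less omega_omega (\<lambda>f g. oo_less g f)"
proof -
  let ?K0 = "cls2 (UNIV :: nat set) (<) (UNIV :: nat set) (>)"
  let ?K1 = "cls2 omega_omega oo_less omega_omega (\<lambda>f g. oo_less g f)"
  have img: "\<forall>A\<in>?K0. \<exists>B\<in>?K1. enum_apply Gam (diag A) = diag B"
  proof
    fix A assume "A \<in> ?K0"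
    then have "iso_to A (UNIV :: nat set) (<) \<or> iso_to A (UNIV :: nat set) (>)"
      unfolding cls2_def by auto
    then have "Out A \<in> ?K1" unfolding cls2_def using is_struc_Out Out_iso Out_iso_rev by blast
    then show "\<exists>B\<in>?K1. enum_apply Gam (diag A) = diag B" using enum_apply_Gam by blast
  qed
  have isos: "struc_iso A B \<longleftrightarrow> struc_iso A' B'"
    if A: "A \<in> ?K0" and B: "B \<in> ?K0" and eA: "enum_apply Gam (diag A) = diag A'"
      and eB: "enum_apply Gam (diag B) = diag B'" for A B A' B'
  proof -
    have A': "A' = Out A" using eA enum_apply_Gam diag_inj by metis
    have B': "B' = Out B" using eB enum_apply_Gam diag_inj by metis
    have cA: "iso_to A (UNIV :: nat set) (<) \<or> iso_to A (UNIV :: nat set) (>)"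
      using A unfolding cls2_def by auto
    have cB: "iso_to B (UNIV :: nat set) (<) \<or> iso_to B (UNIV :: nat set) (>)"
      using B unfolding cls2_def by auto
    show ?thesis
      using cA cB
    proof (elim disjE)
      assume a: "iso_to A (UNIV :: nat set) (<)" and b: "iso_to B (UNIV :: nat set) (<)"
      show ?thesis unfolding A' B'
        using iso_to_struc_iso[OF a b] iso_to_struc_iso[OF Out_iso[OF a] Out_iso[OF b]] by blast
    next
      assume a: "iso_to A (UNIV :: nat set) (>)" and b: "iso_to B (UNIV :: nat set) (>)"
      show ?thesis unfolding A' B'
        using iso_to_struc_iso[OF a b] iso_to_struc_iso[OF Out_iso_rev[OF a] Out_iso_rev[OF b]] by blast
    next
      assume a: "iso_to A (UNIV :: nat set) (<)" and b: "iso_to B (UNIV :: nat set) (>)"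
      have "\<not> struc_iso A B" using struc_iso_iso_to[of A B] b a not_both_nat by blast
      moreover have "\<not> struc_iso (Out A) (Out B)"
        using struc_iso_iso_to[of "Out A" "Out B"] Out_iso[OF a] Out_iso_rev[OF b] not_both_oo by blast
      ultimately show ?thesis unfolding A' B' by blast
    next
      assume a: "iso_to A (UNIV :: nat set) (>)" and b: "iso_to B (UNIV :: nat set) (<)"
      have "\<not> struc_iso A B" using struc_iso_iso_to[of A B] b a not_both_nat by blast
      moreover have "\<not> struc_iso (Out A) (Out B)"
        using struc_iso_iso_to[of "Out A" "Out B"] Out_iso[OF b] Out_iso_rev[OF a] not_both_oo by blast
      ultimately show ?thesis unfolding A' B' by blast
    qed
  qed
  have "computable_embedding Gam ?K0 ?K1"
    unfolding computable_embedding_def using enum_op_Gam img isos by blast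
  then show ?thesis unfolding c_reducible_def by blast
qed

end
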